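(* If the $r\times r$ minors of an $n\times n$ symmetric matrix of indeterminates do not form a tropical basis, then the $(r+1)\times(r+1)$ minors of an $(n+1)\times(n+1)$ symmetric matrix of indeterminates do not form a tropical basis.
   Context: Let $\tilde K$ be the field of Hahn series $\sum_{\alpha\in A}c_\alpha t^\alpha$ ($A\subset\mathbb R$ well-ordered, $c_\alpha\in\mathbb C$); for nonzero $a\in\tilde K$, $\deg(a)$ is the smallest exponent with nonzero coefficient. A symmetric lift of a real symmetric matrix $A$ is a symmetric matrix $\tilde A$ over $\tilde K$ with all entries nonzero and $\deg(\tilde a_{i,j})=A_{i,j}$. For an $r\times r$ submatrix of $A$ with row index set $I$ and column index set $J$, each bijection $\rho:I\to J$ gives a monomial $\prod_{i\in I}X_{i,\rho(i)}$ in commuting variables subject to $X_{i,j}=X_{j,i}$, with value $\sum_{i\in I}A_{i,\rho(i)}$; the submatrix is symmetrically tropically singular if the minimum value is attained by at least two distinct monomials. The $r\times r$ minors of an $n\times n$ symmetric matrix of indeterminates form a tropical basis if for every real symmetric $n\times n$ matrix $A$: every $r\times r$ submatrix of $A$ is symmetrically tropically singular if and only if $A$ has a symmetric lift of rank at most $r-1$ (equivalently, the tropical prevariety of the tropicalized minors equals the tropicalization of the variety they define). *)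

theory Defs
  imports Complex_Main "HOL-Combinatorics.Permutations" "HOL-Library.Multiset"
begin

text \<open>A Hahn series sum c_alpha t^alpha is represented by its coefficient function
  real => complex; it is a Hahn series iff its support is well-ordered.\<close>

type_synonym hahn = "real \<Rightarrow> complex"

definition is_hahn :: "hahn \<Rightarrow> bool" where
  "is_hahn a \<longleftrightarrow> wf {(x, y). x < y \<and> a x \<noteq> 0 \<and> a y \<noteq> 0}"

definition hzero :: hahn where "hzero = (\<lambda>_. 0)"

definition hone :: hahn where "hone = (\<lambda>g. if g = 0 then 1 else 0)"

text \<open>Product of Hahn series (the sum is finite for well-ordered supports).\<close>
definition hmul :: "hahn \<Rightarrow> hahn \<Rightarrow> hahn" where
  "hmul a b = (\<lambda>g. \<Sum>x\<in>{x. a x \<noteq> 0 \<and> b (g - x) \<noteq> 0}. a x * b (g - x))"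

definition hdeg :: "hahn \<Rightarrow> real" where
  "hdeg a = (LEAST x. a x \<noteq> 0)"

definition hdet :: "nat \<Rightarrow> (nat \<Rightarrow> nat \<Rightarrow> hahn) \<Rightarrow> hahn" where
  "hdet r M = (\<lambda>g. \<Sum>p\<in>{p. p permutes {..<r}}.
      of_int (sign p) * foldr hmul (map (\<lambda>k. M k (p k)) [0..<r]) hone g)"

definition hminor :: "(nat \<Rightarrow> nat \<Rightarrow> hahn) \<Rightarrow> nat set \<Rightarrow> nat set \<Rightarrow> hahn" where
  "hminor M I J = hdet (card I)
     (\<lambda>k l. M (sorted_list_of_set I ! k) (sorted_list_of_set J ! l))"

definition symmetric_mat :: "nat \<Rightarrow> (nat \<Rightarrow> nat \<Rightarrow> 'a) \<Rightarrow> bool" where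
  "symmetric_mat n A \<longleftrightarrow> (\<forall>i<n. \<forall>j<n. A i j = A j i)"

definition symmetric_lift :: "nat \<Rightarrow> (nat \<Rightarrow> nat \<Rightarrow> real) \<Rightarrow> (nat \<Rightarrow> nat \<Rightarrow> hahn) \<Rightarrow> bool" where
  "symmetric_lift n A L \<longleftrightarrow> symmetric_mat n L \<and>
     (\<forall>i<n. \<forall>j<n. is_hahn (L i j) \<and> L i j \<noteq> hzero \<and> hdeg (L i j) = A i j)"

text \<open>Rank at most r-1, expressed as vanishing of all r x r minors (i.e. L lies on the
  variety defined by the r x r minors).\<close>
definition rank_le_pred :: "nat \<Rightarrow> nat \<Rightarrow> (nat \<Rightarrow> nat \<Rightarrow> hahn) \<Rightarrow> bool" where
  "rank_le_pred n r L \<longleftrightarrow> (\<forall>I J. I \<subseteq> {..<n} \<longrightarrow> J \<subseteq> {..<n} \<longrightarrow> card I = r \<longrightarrow> card J = r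
      \<longrightarrow> hminor L I J = hzero)"

text \<open>Monomial prod_{i in I} X_{i,rho i} with X_{i,j} = X_{j,i}: a multiset of unordered
  index pairs.\<close>
definition sym_monomial :: "nat set \<Rightarrow> (nat \<Rightarrow> nat) \<Rightarrow> nat set multiset" where
  "sym_monomial I \<rho> = image_mset (\<lambda>i. {i, \<rho> i}) (mset_set I)"

definition trop_value :: "(nat \<Rightarrow> nat \<Rightarrow> real) \<Rightarrow> nat set \<Rightarrow> (nat \<Rightarrow> nat) \<Rightarrow> real" where
  "trop_value A I \<rho> = (\<Sum>i\<in>I. A i (\<rho> i))"

definition sym_trop_singular :: "(nat \<Rightarrow> nat \<Rightarrow> real) \<Rightarrow> nat set \<Rightarrow> nat set \<Rightarrow> bool" where
  "sym_trop_singular A I J \<longleftrightarrow>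
     (\<exists>\<rho>1 \<rho>2. bij_betw \<rho>1 I J \<and> bij_betw \<rho>2 I J \<and>
        sym_monomial I \<rho>1 \<noteq> sym_monomial I \<rho>2 \<and>
        trop_value A I \<rho>2 = trop_value A I \<rho>1 \<and>
        (\<forall>\<rho>. bij_betw \<rho> I J \<longrightarrow> trop_value A I \<rho>1 \<le> trop_value A I \<rho>))"

definition sym_minors_tropical_basis :: "nat \<Rightarrow> nat \<Rightarrow> bool" where
  "sym_minors_tropical_basis n r \<longleftrightarrow>
     (\<forall>A :: nat \<Rightarrow> nat \<Rightarrow> real. symmetric_mat n A \<longrightarrow>
        ((\<forall>I J. I \<subseteq> {..<n} \<longrightarrow> J \<subseteq> {..<n} \<longrightarrow> card I = r \<longrightarrow> card J = r
            \<longrightarrow> sym_trop_singular A I J)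
         \<longleftrightarrow> (\<exists>L. symmetric_lift n A L \<and> rank_le_pred n r L)))"

end

theory Submission
  imports Defs "HOL-Library.Infinite_Set" "Jordan_Normal_Form.Determinant"
begin


definition wo :: "real set \<Rightarrow> bool" where
  "wo S \<longleftrightarrow> \<not> (\<exists>f. \<forall>i. f i \<in> S \<and> f (Suc i) < f i)"

lemma is_hahn_wo: "is_hahn a \<longleftrightarrow> wo {x. a x \<noteq> 0}"
  unfolding is_hahn_def wo_def wf_iff_no_infinite_down_chain by auto

lemma woD: "wo S \<Longrightarrow> (\<And>i. f i \<in> S) \<Longrightarrow> (\<And>i. f (Suc i) < f i) \<Longrightarrow> False"
  unfolding wo_def by blast

lemma wo_subset: "wo B \<Longrightarrow> A \<subseteq> B \<Longrightarrow> wo A"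
  unfolding wo_def by blast

lemma wo_incsub:
  fixes s :: "nat \<Rightarrow> real"
  assumes "wo S" "\<And>n. s n \<in> S"
  shows "\<exists>h. strict_mono h \<and> incseq (\<lambda>n. s (h n))"
proof -
  obtain f where f: "strict_mono f" "monoseq (\<lambda>n. s (f n))" using seq_monosub by blast
  show ?thesis
  proof (cases "incseq (\<lambda>n. s (f n))")
    case True then show ?thesis using f by blast
  next
    case False
    have dsq: "decseq (\<lambda>n. s (f n))" using f(2) False by (simp add: monoseq_iff)
    have dec: "s (f n) \<le> s (f m)" if "m \<le> n" for m n using antimonoD[OF dsq that] by simp
    have "\<exists>k. \<forall>m\<ge>k. s (f m) = s (f k)"
    proof (rule ccontr)
      assume "\<not> ?thesis"
      have st: "\<forall>k. \<exists>m. s (f m) < s (f k)"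
      proof
        fix k
        obtain m where "m \<ge> k" "s (f m) \<noteq> s (f k)" using \<open>\<not> (\<exists>k. \<forall>m\<ge>k. s (f m) = s (f k))\<close> by blast
        then show "\<exists>m. s (f m) < s (f k)" using dec[of k m] by (intro exI[of _ m]) simp
      qed
      obtain F where F: "\<And>k. s (f (F k)) < s (f k)" using choice[OF st] by blast
      have "s (f ((F ^^ Suc n) 0)) < s (f ((F ^^ n) 0))" for n using F by simp
      then show False using woD[of S "\<lambda>n. s (f ((F ^^ n) 0))"] assms by blast
    qed
    then obtain k where k: "\<And>m. m \<ge> k \<Longrightarrow> s (f m) = s (f k)" by blast
    have "strict_mono (\<lambda>n. f (n + k))" using f(1) unfolding strict_mono_def by simp
    moreover have "incseq (\<lambda>n. s (f (n + k)))"
      by (rule incseq_SucI) (simp add: k[of "n + k" for n] k[of "Suc (n + k)" for n])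
    ultimately show ?thesis by blast
  qed
qed

lemma strict_dec_sub:
  fixes f :: "nat \<Rightarrow> real"
  assumes "\<And>i. f (Suc i) < f i" "strict_mono h"
  shows "f (h (Suc i)) < f (h i)"
proof -
  have "h i < h (Suc i)" using assms(2) by (simp add: strict_mono_def)
  then have "- f (h i) < - f (h (Suc i))" using lift_Suc_mono_less[of "\<lambda>i. - f i"] assms(1) by simp
  then show ?thesis by simp
qed

lemma wo_union: assumes "wo A" "wo B" shows "wo (A \<union> B)"
  unfolding wo_def
proof
  assume "\<exists>f. \<forall>i. f i \<in> A \<union> B \<and> f (Suc i) < f i"
  then obtain f where f: "\<And>i. f i \<in> A \<union> B" "\<And>i. f (Suc i) < f i" by blast
  have "infinite {i. f i \<in> A} \<or> infinite {i. f i \<in> B}"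
  proof (rule ccontr)
    assume "\<not> ?thesis"
    then have "finite ({i. f i \<in> A} \<union> {i. f i \<in> B})" by auto
    moreover have "{i. f i \<in> A} \<union> {i. f i \<in> B} = UNIV" using f(1) by auto
    ultimately show False by simp
  qed
  then show False
  proof
    assume inf: "infinite {i. f i \<in> A}"
    let ?h = "enumerate {i. f i \<in> A}"
    have "strict_mono ?h" using enumerate_mono[OF _ inf] by (simp add: strict_mono_def)
    then have "\<And>i. f (?h (Suc i)) < f (?h i)" using strict_dec_sub f(2) by blast
    moreover have "\<And>i. f (?h i) \<in> A" using enumerate_in_set[OF inf] by blast
    ultimately show False using woD[OF assms(1), of "\<lambda>i. f (?h i)"] by blast
  next
    assume inf: "infinite {i. f i \<in> B}"
    let ?h = "enumerate {i. f i \<in> B}"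
    have "strict_mono ?h" using enumerate_mono[OF _ inf] by (simp add: strict_mono_def)
    then have "\<And>i. f (?h (Suc i)) < f (?h i)" using strict_dec_sub f(2) by blast
    moreover have "\<And>i. f (?h i) \<in> B" using enumerate_in_set[OF inf] by blast
    ultimately show False using woD[OF assms(2), of "\<lambda>i. f (?h i)"] by blast
  qed
qed

lemma wo_plus: assumes "wo A" "wo B" shows "wo {x + y |x y. x \<in> A \<and> y \<in> B}"
  unfolding wo_def
proof
  assume "\<exists>f. \<forall>i. f i \<in> {x + y |x y. x \<in> A \<and> y \<in> B} \<and> f (Suc i) < f i"
  then obtain f where f: "\<And>i. \<exists>x y. f i = x + y \<and> x \<in> A \<and> y \<in> B" "\<And>i. f (Suc i) < f i" by blast
  have ex: "\<forall>i. \<exists>x. x \<in> A \<and> f i - x \<in> B"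
  proof
    fix i
    obtain x y where "f i = x + y" "x \<in> A" "y \<in> B" using f(1) by blast
    then show "\<exists>x. x \<in> A \<and> f i - x \<in> B" by (intro exI[of _ x]) simp
  qed
  obtain a where a: "\<forall>i. a i \<in> A \<and> f i - a i \<in> B" using choice[OF ex] by blast
  have aA: "\<And>i. a i \<in> A" using a by blast
  have "\<exists>h. strict_mono h \<and> incseq (\<lambda>n. a (h n))" by (rule wo_incsub[OF assms(1) aA])
  then obtain h :: "nat \<Rightarrow> nat" where h: "strict_mono h" "incseq (\<lambda>n. a (h n))" by blast
  have "\<And>i. f (h (Suc i)) - a (h (Suc i)) < f (h i) - a (h i)"
  proof -
    fix i
    have "f (h (Suc i)) < f (h i)" using strict_dec_sub[of f h, OF f(2) h(1)] .
    moreover have "a (h i) \<le> a (h (Suc i))" using incseq_SucD[OF h(2), of i] by simp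
    ultimately show "f (h (Suc i)) - a (h (Suc i)) < f (h i) - a (h i)" by simp
  qed
  moreover have "\<And>i. f (h i) - a (h i) \<in> B" using a by blast
  ultimately show False using woD[of B "\<lambda>i. f (h i) - a (h i)"] assms(2) by blast
qed

lemma wo_fin2: assumes "wo A" "wo B" shows "finite {x \<in> A. g - x \<in> B}"
proof (rule ccontr)
  define S where "S = {x \<in> A. g - x \<in> B}"
  assume "infinite {x \<in> A. g - x \<in> B}"
  then have "infinite S" unfolding S_def .
  then have "\<exists>f::nat \<Rightarrow> real. inj f \<and> range f \<subseteq> S" by (rule infinite_countable_subset)
  then obtain f :: "nat \<Rightarrow> real" where f: "inj f" "range f \<subseteq> S" by blast
  have fS: "f n \<in> S" for n using f(2) by blast
  have fA: "\<And>n. f n \<in> A" using fS unfolding S_def by simp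
  have fB: "\<And>n. g - f n \<in> B" using fS unfolding S_def by simp
  have "\<exists>h. strict_mono h \<and> incseq (\<lambda>n. f (h n))" by (rule wo_incsub[OF assms(1) fA])
  then obtain h :: "nat \<Rightarrow> nat" where h: "strict_mono h" "incseq (\<lambda>n. f (h n))" by blast
  have "\<And>i. g - f (h (Suc i)) < g - f (h i)"
  proof -
    fix i
    have "f (h i) \<le> f (h (Suc i))" using incseq_SucD[OF h(2), of i] by simp
    moreover have "h i < h (Suc i)" using h(1) by (simp add: strict_mono_Suc_iff)
    then have "f (h i) \<noteq> f (h (Suc i))" using f(1) unfolding inj_def by (metis less_irrefl)
    ultimately show "g - f (h (Suc i)) < g - f (h i)" by simp
  qed
  moreover have "\<And>i. g - f (h i) \<in> B" using fB by simp
  ultimately show False using woD[of B "\<lambda>i. g - f (h i)"] assms(2) by blast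
qed



lemma conv_fin: "is_hahn a \<Longrightarrow> is_hahn b \<Longrightarrow> finite {x. a x \<noteq> 0 \<and> b (g - x) \<noteq> 0}"
  using wo_fin2[of "{x. a x \<noteq> 0}" "{x. b x \<noteq> 0}" g] by (simp add: is_hahn_wo)

lemma hmul_sup: "finite F \<Longrightarrow> {x. a x \<noteq> 0 \<and> b (g - x) \<noteq> 0} \<subseteq> F \<Longrightarrow>
    hmul a b g = (\<Sum>x\<in>F. a x * b (g - x))"
  unfolding hmul_def by (rule sum.mono_neutral_left) auto

lemma hmul_nz: "hmul a b g \<noteq> 0 \<Longrightarrow> \<exists>x. a x \<noteq> 0 \<and> b (g - x) \<noteq> 0"
  unfolding hmul_def by (metis (mono_tags, lifting) empty_Collect_eq sum.empty)

definition sset :: "hahn \<Rightarrow> hahn \<Rightarrow> real set" where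
  "sset a b = {x + y |x y. x \<in> {x. a x \<noteq> 0} \<and> y \<in> {x. b x \<noteq> 0}}"

lemma sset_wo: "is_hahn a \<Longrightarrow> is_hahn b \<Longrightarrow> wo (sset a b)"
  unfolding sset_def is_hahn_wo by (rule wo_plus)

lemma supp_hmul: "{g. hmul a b g \<noteq> 0} \<subseteq> sset a b"
proof
  fix g assume "g \<in> {g. hmul a b g \<noteq> 0}"
  then obtain x where "a x \<noteq> 0" "b (g - x) \<noteq> 0" using hmul_nz by blast
  then show "g \<in> sset a b" unfolding sset_def by (intro CollectI exI[of _ x] exI[of _ "g - x"]) simp
qed

lemma hahn_hmul: "is_hahn a \<Longrightarrow> is_hahn b \<Longrightarrow> is_hahn (hmul a b)"
  using sset_wo supp_hmul wo_subset is_hahn_wo by metis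

lemma hahn_add: "is_hahn a \<Longrightarrow> is_hahn b \<Longrightarrow> is_hahn (\<lambda>g. a g + b g)"
proof -
  assume "is_hahn a" "is_hahn b"
  then have "wo ({x. a x \<noteq> 0} \<union> {x. b x \<noteq> 0})" by (simp add: is_hahn_wo wo_union)
  moreover have "{x. a x + b x \<noteq> 0} \<subseteq> {x. a x \<noteq> 0} \<union> {x. b x \<noteq> 0}" by auto
  ultimately show ?thesis by (simp add: is_hahn_wo wo_subset)
qed

lemma hahn_scal: "is_hahn a \<Longrightarrow> is_hahn (\<lambda>g. c * a g)"
proof -
  assume "is_hahn a"
  moreover have "{x. c * a x \<noteq> 0} \<subseteq> {x. a x \<noteq> 0}" by auto
  ultimately show ?thesis by (simp add: is_hahn_wo wo_subset)
qed

lemma hahn_uminus: "is_hahn a \<Longrightarrow> is_hahn (\<lambda>g. - a g)"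
  using hahn_scal[of a "-1"] by simp

lemma hahn_diff: "is_hahn a \<Longrightarrow> is_hahn b \<Longrightarrow> is_hahn (\<lambda>g. a g - b g)"
  using hahn_add[of a "\<lambda>g. - b g"] hahn_uminus[of b] by simp

lemma hahn_zero: "is_hahn hzero"
  unfolding is_hahn_def hzero_def by simp

lemma hahn_one: "is_hahn hone"
proof -
  have "{(x, y). x < y \<and> hone x \<noteq> 0 \<and> hone y \<noteq> 0} = {}" unfolding hone_def by auto
  then show ?thesis unfolding is_hahn_def by (simp only: wf_def) blast
qed

lemma hmul_comm: "hmul a b = hmul b a"
proof
  fix g
  show "hmul a b g = hmul b a g"
    unfolding hmul_def
    by (rule sum.reindex_bij_witness[of _ "\<lambda>x. g - x" "\<lambda>x. g - x"]) (auto simp: mult.commute)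
qed

lemma hmul_one: "hmul hone a = a"
proof
  fix g
  have "hmul hone a g = (\<Sum>x\<in>{0}. hone x * a (g - x))"
    by (rule hmul_sup) (auto simp: hone_def)
  then show "hmul hone a g = a g" by (simp add: hone_def)
qed

lemma hmul_const: "hmul (\<lambda>g. if g = 0 then c else 0) a = (\<lambda>g. c * a g)"
proof
  fix g
  have "hmul (\<lambda>g. if g = 0 then c else 0) a g = (\<Sum>x\<in>{0}. (\<lambda>g. if g = 0 then c else 0) x * a (g - x))"
    by (rule hmul_sup) auto
  then show "hmul (\<lambda>g. if g = 0 then c else 0) a g = c * a g" by simp
qed

lemma hmul_zero: "hmul hzero a = hzero"
  unfolding hmul_def hzero_def by simp

lemma hmul_distrib:
  assumes "is_hahn a" "is_hahn b" "is_hahn c"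
  shows "hmul a (\<lambda>g. b g + c g) = (\<lambda>g. hmul a b g + hmul a c g)"
proof
  fix g
  let ?F = "{x. a x \<noteq> 0 \<and> b (g - x) \<noteq> 0} \<union> {x. a x \<noteq> 0 \<and> c (g - x) \<noteq> 0}"
  have fin: "finite ?F" using conv_fin assms by blast
  have "hmul a (\<lambda>g. b g + c g) g = (\<Sum>x\<in>?F. a x * (b (g - x) + c (g - x)))"
    by (rule hmul_sup[OF fin]) auto
  also have "\<dots> = (\<Sum>x\<in>?F. a x * b (g - x)) + (\<Sum>x\<in>?F. a x * c (g - x))"
    by (simp add: distrib_left sum.distrib)
  also have "(\<Sum>x\<in>?F. a x * b (g - x)) = hmul a b g" by (rule hmul_sup[OF fin, symmetric]) auto
  also have "(\<Sum>x\<in>?F. a x * c (g - x)) = hmul a c g" by (rule hmul_sup[OF fin, symmetric]) auto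
  finally show "hmul a (\<lambda>g. b g + c g) g = hmul a b g + hmul a c g" .
qed

lemma hmul_assoc:
  assumes a: "is_hahn a" and b: "is_hahn b" and c: "is_hahn c"
  shows "hmul (hmul a b) c = hmul a (hmul b c)"
proof
  fix g
  define F1 where "F1 = {y \<in> sset a b. g - y \<in> {x. c x \<noteq> 0}}"
  define F2 where "F2 = (\<lambda>y. {x. a x \<noteq> 0 \<and> b (y - x) \<noteq> 0})"
  define G1 where "G1 = {x \<in> {x. a x \<noteq> 0}. g - x \<in> sset b c}"
  define G2 where "G2 = (\<lambda>x. {z. b z \<noteq> 0 \<and> c (g - x - z) \<noteq> 0})"
  have fF1: "finite F1" unfolding F1_def using wo_fin2[OF sset_wo[OF a b], of "{x. c x \<noteq> 0}"] c
    by (simp add: is_hahn_wo)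
  have fG1: "finite G1" unfolding G1_def using wo_fin2[of "{x. a x \<noteq> 0}" "sset b c"] sset_wo[OF b c] a
    by (simp add: is_hahn_wo)
  have fF2: "finite (F2 y)" for y unfolding F2_def using conv_fin[OF a b] .
  have fG2: "finite (G2 x)" for x unfolding G2_def using conv_fin[OF b c, of "g - x"] .
  have "hmul (hmul a b) c g = (\<Sum>y\<in>F1. hmul a b y * c (g - y))"
    by (rule hmul_sup[OF fF1]) (use supp_hmul in \<open>auto simp: F1_def\<close>)
  also have "\<dots> = (\<Sum>y\<in>F1. \<Sum>x\<in>F2 y. a x * b (y - x) * c (g - y))"
    unfolding hmul_def F2_def by (simp add: sum_distrib_right)
  also have "\<dots> = (\<Sum>(y, x)\<in>Sigma F1 F2. a x * b (y - x) * c (g - y))"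
    by (rule sum.Sigma[OF fF1]) (use fF2 in auto)
  also have "\<dots> = (\<Sum>(x, z)\<in>Sigma G1 G2. a x * (b z * c (g - x - z)))"
  proof (rule sum.reindex_bij_witness[of _ "\<lambda>(x, z). (x + z, x)" "\<lambda>(y, x). (x, y - x)"])
    fix p assume "p \<in> Sigma F1 F2"
    then obtain y x where p: "p = (y, x)" "y \<in> F1" "x \<in> F2 y" by blast
    then show "(\<lambda>(x, z). (x + z, x)) ((\<lambda>(y, x). (x, y - x)) p) = p" by simp
    have "g - x \<in> sset b c" unfolding sset_def using p
      by (intro CollectI exI[of _ "y - x"] exI[of _ "g - y"]) (auto simp: F1_def F2_def)
    then show "(\<lambda>(y, x). (x, y - x)) p \<in> Sigma G1 G2" using p by (auto simp: G1_def G2_def F1_def F2_def)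
    show "(case (\<lambda>(y, x). (x, y - x)) p of (x, z) \<Rightarrow> a x * (b z * c (g - x - z))) =
       (case p of (y, x) \<Rightarrow> a x * b (y - x) * c (g - y))" using p by simp
  next
    fix q assume "q \<in> Sigma G1 G2"
    then obtain x z where q: "q = (x, z)" "x \<in> G1" "z \<in> G2 x" by blast
    then show "(\<lambda>(y, x). (x, y - x)) ((\<lambda>(x, z). (x + z, x)) q) = q" by simp
    have "x + z \<in> sset a b" unfolding sset_def using q
      by (intro CollectI exI[of _ x] exI[of _ z]) (auto simp: G1_def G2_def)
    moreover have "g - (x + z) = g - x - z" by simp
    ultimately show "(\<lambda>(x, z). (x + z, x)) q \<in> Sigma F1 F2" using q by (auto simp: G1_def G2_def F1_def F2_def diff_diff_eq)
  qed
  also have "\<dots> = (\<Sum>x\<in>G1. \<Sum>z\<in>G2 x. a x * (b z * c (g - x - z)))"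
    by (rule sum.Sigma[OF fG1, symmetric]) (use fG2 in auto)
  also have "\<dots> = (\<Sum>x\<in>G1. a x * hmul b c (g - x))"
    unfolding hmul_def G2_def by (simp add: sum_distrib_left)
  also have "\<dots> = hmul a (hmul b c) g"
    by (rule hmul_sup[OF fG1, symmetric]) (use supp_hmul in \<open>auto simp: G1_def\<close>)
  finally show "hmul (hmul a b) c g = hmul a (hmul b c) g" .
qed



lemma hdeg_eq: "a z \<noteq> 0 \<Longrightarrow> (\<And>x. x < z \<Longrightarrow> a x = 0) \<Longrightarrow> hdeg a = z"
  unfolding hdeg_def by (rule Least_equality) (auto simp: not_less[symmetric])

lemma hdeg_ex:
  assumes "is_hahn a" "a \<noteq> hzero"
  shows "a (hdeg a) \<noteq> 0 \<and> (\<forall>x < hdeg a. a x = 0)"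
proof -
  obtain x0 where x0: "a x0 \<noteq> 0" using assms(2) unfolding hzero_def by auto
  obtain z where z: "z \<in> {x. a x \<noteq> 0}"
    and zmin: "\<And>y. (y, z) \<in> {(x, y). x < y \<and> a x \<noteq> 0 \<and> a y \<noteq> 0} \<Longrightarrow> y \<notin> {x. a x \<noteq> 0}"
    using wfE_min[OF assms(1)[unfolded is_hahn_def], of x0 "{x. a x \<noteq> 0}"] x0 by blast
  have low: "\<And>x. x < z \<Longrightarrow> a x = 0" using z zmin by blast
  have "hdeg a = z" using z low by (intro hdeg_eq) auto
  then show ?thesis using z low by auto
qed

lemma hdeg_low: "is_hahn a \<Longrightarrow> x < hdeg a \<Longrightarrow> a x = 0"
  using hdeg_ex[of a] by (cases "a = hzero") (auto simp: hzero_def)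

lemma hdeg_le: "is_hahn a \<Longrightarrow> a x \<noteq> 0 \<Longrightarrow> hdeg a \<le> x"
  using hdeg_low[of a x] by fastforce

lemma hmul_deg:
  assumes a: "is_hahn a" and b: "is_hahn b" and an: "a \<noteq> hzero" and bn: "b \<noteq> hzero"
  shows "hmul a b (hdeg a + hdeg b) = a (hdeg a) * b (hdeg b)"
    and "\<And>g. g < hdeg a + hdeg b \<Longrightarrow> hmul a b g = 0"
proof -
  have "hmul a b (hdeg a + hdeg b) = (\<Sum>x\<in>{hdeg a}. a x * b (hdeg a + hdeg b - x))"
  proof (rule hmul_sup)
    show "{x. a x \<noteq> 0 \<and> b (hdeg a + hdeg b - x) \<noteq> 0} \<subseteq> {hdeg a}"
    proof
      fix x assume "x \<in> {x. a x \<noteq> 0 \<and> b (hdeg a + hdeg b - x) \<noteq> 0}"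
      then have "hdeg a \<le> x" "hdeg b \<le> hdeg a + hdeg b - x" using hdeg_le a b by blast+
      then show "x \<in> {hdeg a}" by simp
    qed
  qed simp
  then show "hmul a b (hdeg a + hdeg b) = a (hdeg a) * b (hdeg b)" by simp
  fix g assume g: "g < hdeg a + hdeg b"
  have "hmul a b g = (\<Sum>x\<in>{}. a x * b (g - x))"
  proof (rule hmul_sup)
    show "{x. a x \<noteq> 0 \<and> b (g - x) \<noteq> 0} \<subseteq> {}"
    proof
      fix x assume "x \<in> {x. a x \<noteq> 0 \<and> b (g - x) \<noteq> 0}"
      then have "hdeg a \<le> x" "hdeg b \<le> g - x" using hdeg_le a b by blast+
      then show "x \<in> {}" using g by simp
    qed
  qed simp
  then show "hmul a b g = 0" by simp
qed

lemma hmul_nonzero: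
  assumes a: "is_hahn a" and b: "is_hahn b" and an: "a \<noteq> hzero" and bn: "b \<noteq> hzero"
  shows "hmul a b \<noteq> hzero" "hdeg (hmul a b) = hdeg a + hdeg b"
proof -
  have "hmul a b (hdeg a + hdeg b) \<noteq> 0" using hmul_deg(1)[OF assms] hdeg_ex a b an bn by simp
  then show "hmul a b \<noteq> hzero" by (auto simp: hzero_def)
  show "hdeg (hmul a b) = hdeg a + hdeg b"
    by (rule hdeg_eq) (use \<open>hmul a b (hdeg a + hdeg b) \<noteq> 0\<close> hmul_deg(2)[OF assms] in auto)
qed

lemma hdeg_diff:
  assumes u: "is_hahn u" and v: "is_hahn v" and un: "u \<noteq> hzero" and lt: "hdeg u < hdeg v"
  shows "(\<lambda>g. u g - v g) \<noteq> hzero" "hdeg (\<lambda>g. u g - v g) = hdeg u"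
proof -
  have "u (hdeg u) - v (hdeg u) \<noteq> 0" using hdeg_ex[OF u un] hdeg_low[OF v lt] by simp
  then show "(\<lambda>g. u g - v g) \<noteq> hzero" by (auto simp: hzero_def dest: fun_cong[of _ _ "hdeg u"])
  show "hdeg (\<lambda>g. u g - v g) = hdeg u"
  proof (rule hdeg_eq)
    show "u (hdeg u) - v (hdeg u) \<noteq> 0" by fact
    fix x assume "x < hdeg u"
    then show "u x - v x = 0" using hdeg_low[OF u] hdeg_low[OF v, of x] lt by simp
  qed
qed

section \<open>The ring of Hahn series\<close>

lemma hmul_distrib_right:
  assumes "is_hahn a" "is_hahn b" "is_hahn c"
  shows "hmul (\<lambda>g. a g + b g) c = (\<lambda>g. hmul a c g + hmul b c g)"
  using hmul_distrib[OF assms(3,1,2)] by (simp add: hmul_comm[of c])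

typedef hs = "{a. is_hahn a}" morphisms hrep habs using hahn_zero by blast

setup_lifting type_definition_hs

instantiation hs :: comm_ring_1
begin
lift_definition zero_hs :: hs is hzero by (simp add: hahn_zero)
lift_definition one_hs :: hs is hone by (simp add: hahn_one)
lift_definition plus_hs :: "hs \<Rightarrow> hs \<Rightarrow> hs" is "\<lambda>a b g. a g + b g" by (simp add: hahn_add)
lift_definition uminus_hs :: "hs \<Rightarrow> hs" is "\<lambda>a g. - a g" by (simp add: hahn_uminus)
lift_definition minus_hs :: "hs \<Rightarrow> hs \<Rightarrow> hs" is "\<lambda>a b g. a g - b g" by (simp add: hahn_diff)
lift_definition times_hs :: "hs \<Rightarrow> hs \<Rightarrow> hs" is hmul by (simp add: hahn_hmul)
instance
proof
  fix a b c :: hs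
  show "a + b + c = a + (b + c)" by transfer (simp add: add.assoc)
  show "a + b = b + a" by transfer (simp add: add.commute)
  show "0 + a = a" by transfer (simp add: hzero_def)
  show "- a + a = 0" by transfer (simp add: hzero_def)
  show "a - b = a + - b" by transfer simp
  show "a * b * c = a * (b * c)" by transfer (rule hmul_assoc)
  show "a * b = b * a" by transfer (rule hmul_comm)
  show "1 * a = a" by transfer (rule hmul_one)
  show "(a + b) * c = a * c + b * c" by transfer (rule hmul_distrib_right)
  show "(0::hs) \<noteq> 1" by transfer (auto simp: hzero_def hone_def dest: fun_cong[of _ _ 0])
qed

end

instance hs :: idom
proof
  fix a b :: hs
  show "a \<noteq> 0 \<Longrightarrow> b \<noteq> 0 \<Longrightarrow> a * b \<noteq> 0" by transfer (rule hmul_nonzero(1))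
qed

lemma hrep_hahn: "is_hahn (hrep a)" using hrep by simp
lemma hrep_habs: "is_hahn a \<Longrightarrow> hrep (habs a) = a" using habs_inverse by simp
lemma hrep_zero: "hrep 0 = hzero" by (rule zero_hs.rep_eq)
lemma hrep_one: "hrep 1 = hone" by (rule one_hs.rep_eq)
lemma hrep_add: "hrep (a + b) = (\<lambda>g. hrep a g + hrep b g)" by (rule plus_hs.rep_eq)
lemma hrep_diff: "hrep (a - b) = (\<lambda>g. hrep a g - hrep b g)" by (rule minus_hs.rep_eq)
lemma hrep_mult: "hrep (a * b) = hmul (hrep a) (hrep b)" by (rule times_hs.rep_eq)
lemma hrep_eq0: "hrep a = hzero \<longleftrightarrow> a = 0" by (metis hrep_inject hrep_zero)

lemma hrep_sum: "hrep (sum f F) = (\<lambda>g. \<Sum>x\<in>F. hrep (f x) g)"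
proof (induction F rule: infinite_finite_induct)
  case (infinite F) then show ?case by (simp add: hrep_zero hzero_def)
next
  case empty then show ?case by (simp add: hrep_zero hzero_def)
next
  case (insert x F) then show ?case by (simp add: hrep_add)
qed

lemma hrep_of_nat: "hrep (of_nat n) = (\<lambda>g. if g = 0 then of_nat n else 0)"
proof (induction n)
  case 0 then show ?case by (auto simp: hrep_zero hzero_def)
next
  case (Suc n) then show ?case by (auto simp: hrep_add hrep_one hone_def)
qed

lemma hrep_uminus: "hrep (- a) = (\<lambda>g. - hrep a g)" by (rule uminus_hs.rep_eq)

lemma hrep_of_int: "hrep (of_int k) = (\<lambda>g. if g = 0 then of_int k else 0)"
proof (cases k rule: int_cases)
  case (nonneg n) then show ?thesis using hrep_of_nat[of n] by auto
next
  case (neg n)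
  then have "(of_int k :: hs) = - of_nat (Suc n)" by (simp only: of_int_minus of_int_of_nat_eq)
  then have "hrep (of_int k) = (\<lambda>g. - hrep (of_nat (Suc n)) g)" by (simp only: hrep_uminus)
  then show ?thesis unfolding hrep_of_nat using neg by auto
qed

lemma hrep_of_int_mult: "hrep (of_int k * a) = (\<lambda>g. of_int k * hrep a g)"
  by (simp add: hrep_mult hrep_of_int hmul_const)

lemma hrep_prod_list: "hrep (prod_list xs) = foldr hmul (map hrep xs) hone"
  by (induction xs) (simp_all add: hrep_one hrep_mult)

lemma hdet_rep:
  assumes "\<And>i j. i < r \<Longrightarrow> j < r \<Longrightarrow> is_hahn (M i j)"
  shows "hdet r M = hrep (det (mat r r (\<lambda>(i, j). habs (M i j))))"
proof -
  have "det (mat r r (\<lambda>(i, j). habs (M i j))) =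
     (\<Sum>p | p permutes {..<r}. of_int (sign p) * (\<Prod>i = 0..<r. habs (M i (p i))))"
  proof -
    have e: "mat r r (\<lambda>(i, j). habs (M i j)) $$ (i, p i) = habs (M i (p i))" if "i < r" "p permutes {..<r}" for i p
      using permutes_in_image[OF that(2)] that(1) by simp
    show ?thesis unfolding det_def
      by (simp add: atLeast0LessThan)
  qed
  then have "hrep (det (mat r r (\<lambda>(i, j). habs (M i j)))) =
     (\<lambda>g. \<Sum>p | p permutes {..<r}. of_int (sign p) * hrep (\<Prod>i = 0..<r. habs (M i (p i))) g)"
    by (simp add: hrep_sum hrep_of_int_mult)
  also have "\<dots> = hdet r M"
    unfolding hdet_def
  proof (intro ext sum.cong refl)
    fix g p assume p: "p \<in> {p. p permutes {..<r}}"
    have e1: "(\<Prod>i = 0..<r. habs (M i (p i))) = prod_list (map (\<lambda>i. habs (M i (p i))) [0..<r])"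
      by (subst prod.distinct_set_conv_list[symmetric]) auto
    have e2: "map (\<lambda>x. hrep (habs (M x (p x)))) [0..<r] = map (\<lambda>k. M k (p k)) [0..<r]"
    proof (rule map_cong[OF refl])
      fix x assume "x \<in> set [0..<r]"
      then have "x < r" "p x < r" using permutes_in_image[of p "{..<r}" x] p by auto
      then show "hrep (habs (M x (p x))) = M x (p x)" using assms by (simp add: hrep_habs)
    qed
    have "hrep (\<Prod>i = 0..<r. habs (M i (p i))) = foldr hmul (map hrep (map (\<lambda>i. habs (M i (p i))) [0..<r])) hone"
      unfolding e1 by (rule hrep_prod_list)
    also have "map hrep (map (\<lambda>i. habs (M i (p i))) [0..<r]) = map (\<lambda>x. hrep (habs (M x (p x)))) [0..<r]" by simp
    also note e2
    finally have "hrep (\<Prod>i = 0..<r. habs (M i (p i))) = foldr hmul (map (\<lambda>k. M k (p k)) [0..<r]) hone" .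
    then show "of_int (sign p) * hrep (\<Prod>i = 0..<r. habs (M i (p i))) g =
         complex_of_int (sign p) * foldr hmul (map (\<lambda>k. M k (p k)) [0..<r]) hone g" by simp
  qed
  finally show ?thesis by simp
qed

lemma hdet_sum:
  assumes "\<And>i j. i < r \<Longrightarrow> j < r \<Longrightarrow> is_hahn (M i j)"
  shows "hdet r M = (\<lambda>g. \<Sum>p | p permutes {..<r}. of_int (sign p) * hrep (\<Prod>i = 0..<r. habs (M i (p i))) g)"
proof -
  have "(\<lambda>g. \<Sum>p | p permutes {..<r}. of_int (sign p) * hrep (\<Prod>i = 0..<r. habs (M i (p i))) g) = hdet r M"
    unfolding hdet_def
  proof (intro ext sum.cong refl)
    fix g p assume p: "p \<in> {p. p permutes {..<r}}"
    have e1: "(\<Prod>i = 0..<r. habs (M i (p i))) = prod_list (map (\<lambda>i. habs (M i (p i))) [0..<r])"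
      by (subst prod.distinct_set_conv_list[symmetric]) auto
    have e2: "map (\<lambda>x. hrep (habs (M x (p x)))) [0..<r] = map (\<lambda>k. M k (p k)) [0..<r]"
    proof (rule map_cong[OF refl])
      fix x assume "x \<in> set [0..<r]"
      then have "x < r" "p x < r" using permutes_in_image[of p "{..<r}" x] p by auto
      then show "hrep (habs (M x (p x))) = M x (p x)" using assms by (simp add: hrep_habs)
    qed
    have "hrep (\<Prod>i = 0..<r. habs (M i (p i))) = foldr hmul (map hrep (map (\<lambda>i. habs (M i (p i))) [0..<r])) hone"
      unfolding e1 by (rule hrep_prod_list)
    also have "map hrep (map (\<lambda>i. habs (M i (p i))) [0..<r]) = map (\<lambda>x. hrep (habs (M x (p x)))) [0..<r]" by simp
    also note e2
    finally have "hrep (\<Prod>i = 0..<r. habs (M i (p i))) = foldr hmul (map (\<lambda>k. M k (p k)) [0..<r]) hone" .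
    then show "of_int (sign p) * hrep (\<Prod>i = 0..<r. habs (M i (p i))) g =
         complex_of_int (sign p) * foldr hmul (map (\<lambda>k. M k (p k)) [0..<r]) hone g" by simp
  qed
  then show ?thesis by simp
qed



lemma chio:
  fixes B :: "'a::idom mat"
  assumes B: "B \<in> carrier_mat r r" and x: "x \<in> carrier_mat r 1" and y: "y \<in> carrier_mat 1 r"
  shows "det (four_block_mat B x y (c \<cdot>\<^sub>m 1\<^sub>m 1)) * c ^ r = det (c \<cdot>\<^sub>m B - x * y) * c"
proof -
  let ?C = "c \<cdot>\<^sub>m 1\<^sub>m 1 :: 'a mat"
  let ?M = "four_block_mat B x y ?C"
  let ?N = "four_block_mat (c \<cdot>\<^sub>m 1\<^sub>m r) (0\<^sub>m r 1) (- y) (1\<^sub>m 1 :: 'a mat)"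
  have C: "?C \<in> carrier_mat 1 1" by simp
  have M: "?M \<in> carrier_mat (r + 1) (r + 1)" using B x y C by (intro four_block_carrier_mat) auto
  have N: "?N \<in> carrier_mat (r + 1) (r + 1)" using y by (intro four_block_carrier_mat) auto
  have "?M * ?N = four_block_mat (B * (c \<cdot>\<^sub>m 1\<^sub>m r) + x * - y) (B * 0\<^sub>m r 1 + x * 1\<^sub>m 1)
      (y * (c \<cdot>\<^sub>m 1\<^sub>m r) + ?C * - y) (y * 0\<^sub>m r 1 + ?C * 1\<^sub>m 1)"
    by (rule mult_four_block_mat) (use B x y in auto)
  also have "B * (c \<cdot>\<^sub>m 1\<^sub>m r) + x * - y = c \<cdot>\<^sub>m B - x * y"
    using B x y by (simp add: mult_smult_distrib[OF B one_carrier_mat] right_mult_one_mat[OF B] add_uminus_minus_mat[of _ r r])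
  also have "B * 0\<^sub>m r 1 + x * 1\<^sub>m 1 = x" using B x by simp
  also have "y * (c \<cdot>\<^sub>m 1\<^sub>m r) + ?C * - y = 0\<^sub>m 1 r"
    using y by (intro eq_matI) (auto simp: mult_smult_distrib[OF y] mult_smult_assoc_mat)
  also have "y * 0\<^sub>m r 1 + ?C * 1\<^sub>m 1 = ?C" using y by simp
  finally have MN: "?M * ?N = four_block_mat (c \<cdot>\<^sub>m B - x * y) x (0\<^sub>m 1 r) ?C" .
  have "det ?M * det ?N = det (?M * ?N)" using det_mult[OF M N] ..
  also have "\<dots> = det (c \<cdot>\<^sub>m B - x * y) * det ?C" unfolding MN
    by (rule det_four_block_mat_lower_left_zero) (use B x y in auto)
  also have "det ?C = c" by simp
  also have "det ?N = det (c \<cdot>\<^sub>m 1\<^sub>m r) * det (1\<^sub>m 1 :: 'a mat)"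
    by (rule det_four_block_mat_upper_right_zero) (use y in auto)
  also have "\<dots> = c ^ r" by simp
  finally show ?thesis .
qed



definition en :: "nat set \<Rightarrow> nat \<Rightarrow> nat" where "en I = (!) (sorted_list_of_set I)"
definition ix :: "nat set \<Rightarrow> nat \<Rightarrow> nat" where "ix I = the_inv_into {..<card I} (en I)"
definition rho :: "nat set \<Rightarrow> nat set \<Rightarrow> (nat \<Rightarrow> nat) \<Rightarrow> nat \<Rightarrow> nat" where
  "rho I J p = (\<lambda>i. en J (p (ix I i)))"
definition perm_of :: "nat set \<Rightarrow> nat set \<Rightarrow> (nat \<Rightarrow> nat) \<Rightarrow> nat \<Rightarrow> nat" where
  "perm_of I J \<rho> = (\<lambda>k. if k < card I then ix J (\<rho> (en I k)) else k)"

lemma en_bij: "finite I \<Longrightarrow> bij_betw (en I) {..<card I} I"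
  unfolding en_def by (rule bij_betw_nth) auto

lemma ix_bij: "finite I \<Longrightarrow> bij_betw (ix I) I {..<card I}"
  unfolding ix_def using bij_betw_the_inv_into[OF en_bij] .

lemma ix_en: "finite I \<Longrightarrow> k < card I \<Longrightarrow> ix I (en I k) = k"
  unfolding ix_def using en_bij[of I] by (simp add: bij_betw_def the_inv_into_f_f)

lemma en_ix: "finite I \<Longrightarrow> i \<in> I \<Longrightarrow> en I (ix I i) = i"
  unfolding ix_def using en_bij[of I] by (simp add: f_the_inv_into_f_bij_betw)

lemma en_in: "finite I \<Longrightarrow> k < card I \<Longrightarrow> en I k \<in> I"
  using en_bij[of I] by (auto simp: bij_betw_def)

lemma ix_lt: "finite I \<Longrightarrow> i \<in> I \<Longrightarrow> ix I i < card I"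
  using ix_bij[of I] by (auto simp: bij_betw_def)

lemma en_inj: "finite I \<Longrightarrow> k < card I \<Longrightarrow> l < card I \<Longrightarrow> en I k = en I l \<Longrightarrow> k = l"
  using en_bij[of I] by (auto simp: bij_betw_def inj_on_def)

lemma rho_en: "finite I \<Longrightarrow> k < card I \<Longrightarrow> rho I J p (en I k) = en J (p k)"
  unfolding rho_def by (simp add: ix_en)

lemma rho_bij:
  assumes "finite I" "finite J" "card I = r" "card J = r" "p permutes {..<r}"
  shows "bij_betw (rho I J p) I J"
proof -
  have "bij_betw (en J \<circ> p \<circ> ix I) I J"
    using ix_bij[OF assms(1)] permutes_imp_bij[OF assms(5)] en_bij[OF assms(2)] assms(3,4)
    by (auto intro: bij_betw_trans)
  then show ?thesis unfolding rho_def o_def .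
qed

lemma perm_of_permutes:
  assumes "finite I" "finite J" "card I = r" "card J = r" "bij_betw \<rho> I J"
  shows "perm_of I J \<rho> permutes {..<r}"
proof (rule bij_imp_permutes)
  have "bij_betw (ix J \<circ> \<rho> \<circ> en I) {..<r} {..<r}"
    using ix_bij[OF assms(2)] assms(5) en_bij[OF assms(1)] assms(3,4)
    by (auto intro: bij_betw_trans)
  then show "bij_betw (perm_of I J \<rho>) {..<r} {..<r}"
    by (rule bij_betw_cong[THEN iffD1, rotated]) (auto simp: perm_of_def assms(3))
  show "\<And>x. x \<notin> {..<r} \<Longrightarrow> perm_of I J \<rho> x = x" by (auto simp: perm_of_def assms(3))
qed

lemma rho_perm_of:
  assumes "finite I" "finite J" "card I = card J" "bij_betw \<rho> I J" "i \<in> I"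
  shows "rho I J (perm_of I J \<rho>) i = \<rho> i"
proof -
  have "\<rho> i \<in> J" using assms(4,5) by (auto simp: bij_betw_def)
  then show ?thesis unfolding rho_def perm_of_def
    using ix_lt[OF assms(1,5)] en_ix[OF assms(1,5)] en_ix[OF assms(2)] by simp
qed

lemma trop_value_idx: "finite I \<Longrightarrow> trop_value A I \<rho> = (\<Sum>k<card I. A (en I k) (\<rho> (en I k)))"
  unfolding trop_value_def by (rule sum.reindex_bij_betw[OF en_bij, symmetric])

lemma sym_monomial_idx: "finite I \<Longrightarrow> sym_monomial I \<rho> = image_mset (\<lambda>k. {en I k, \<rho> (en I k)}) (mset_set {..<card I})"
proof -
  assume fin: "finite I"
  have "mset_set I = image_mset (en I) (mset_set {..<card I})"
    using en_bij[OF fin] by (simp add: image_mset_mset_set bij_betw_def)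
  then show ?thesis unfolding sym_monomial_def by (simp add: multiset.map_comp o_def)
qed

lemma trop_value_cong: "(\<And>i. i \<in> I \<Longrightarrow> \<rho> i = \<rho>' i) \<Longrightarrow> trop_value A I \<rho> = trop_value A I \<rho>'"
  unfolding trop_value_def by simp

lemma sym_monomial_cong: "(\<And>i. i \<in> I \<Longrightarrow> \<rho> i = \<rho>' i) \<Longrightarrow> sym_monomial I \<rho> = sym_monomial I \<rho>'"
proof (cases "finite I")
  case True
  assume a: "\<And>i. i \<in> I \<Longrightarrow> \<rho> i = \<rho>' i"
  show ?thesis unfolding sym_monomial_def
  proof (rule image_mset_cong)
    fix x assume "x \<in># mset_set I"
    then have "x \<in> I" using True by simp
    then show "{x, \<rho> x} = {x, \<rho>' x}" using a by simp
  qed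
next
  case False then show ?thesis by (simp add: sym_monomial_def)
qed

lemma min_exists:
  assumes "finite I" "finite J" "card I = card J"
  shows "\<exists>\<rho>1. bij_betw \<rho>1 I J \<and> (\<forall>\<rho>. bij_betw \<rho> I J \<longrightarrow> trop_value A I \<rho>1 \<le> trop_value A I \<rho>)"
proof -
  let ?r = "card I"
  let ?P = "{p. p permutes {..<?r}}"
  let ?V = "(\<lambda>p. trop_value A I (rho I J p)) ` ?P"
  have fin: "finite ?V" by (simp add: finite_permutations)
  have "id \<in> ?P" by (simp add: permutes_id)
  then have ne: "?V \<noteq> {}" by blast
  have "Min ?V \<in> ?V" using Min_in[OF fin ne] .
  then obtain p0 :: "nat \<Rightarrow> nat" where p0: "p0 \<in> ?P" "trop_value A I (rho I J p0) = Min ?V"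
    by (metis (no_types, lifting) imageE)
  show ?thesis
  proof (intro exI conjI allI impI)
    show "bij_betw (rho I J p0) I J" using rho_bij[OF assms(1,2) refl assms(3)[symmetric]] p0(1) by simp
    fix \<rho> assume b: "bij_betw \<rho> I J"
    have "trop_value A I \<rho> = trop_value A I (rho I J (perm_of I J \<rho>))"
      by (rule trop_value_cong) (simp add: rho_perm_of[OF assms b])
    moreover have "perm_of I J \<rho> \<in> ?P" using perm_of_permutes[OF assms(1,2) refl assms(3)[symmetric] b] by simp
    then have "trop_value A I (rho I J (perm_of I J \<rho>)) \<in> ?V" by blast
    then have "Min ?V \<le> trop_value A I (rho I J (perm_of I J \<rho>))" using Min_le[OF fin] by blast
    ultimately show "trop_value A I (rho I J p0) \<le> trop_value A I \<rho>" using p0(2) by simp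
  qed
qed



lemma trop_value_remove: "finite I \<Longrightarrow> i0 \<in> I \<Longrightarrow>
   trop_value A I \<rho> = A i0 (\<rho> i0) + trop_value A (I - {i0}) \<rho>"
  unfolding trop_value_def by (rule sum.remove)

lemma sym_monomial_remove: "finite I \<Longrightarrow> i0 \<in> I \<Longrightarrow>
   sym_monomial I \<rho> = add_mset {i0, \<rho> i0} (sym_monomial (I - {i0}) \<rho>)"
  unfolding sym_monomial_def by (simp add: mset_set.remove[of I i0])

lemma ext_sing:
  assumes fin: "finite I" and i0: "i0 \<in> I" and b1: "bij_betw \<rho>1 I J"
    and min1: "\<forall>\<rho>. bij_betw \<rho> I J \<longrightarrow> trop_value A I \<rho>1 \<le> trop_value A I \<rho>"
    and sub: "sym_trop_singular A (I - {i0}) (J - {\<rho>1 i0})"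
  shows "sym_trop_singular A I J"
proof -
  define j0 where "j0 = \<rho>1 i0"
  define I0 where "I0 = I - {i0}"
  define J0 where "J0 = J - {j0}"
  have finI0: "finite I0" using fin by (simp add: I0_def)
  have j0J: "j0 \<in> J" using b1 i0 unfolding bij_betw_def j0_def by blast
  have b10: "bij_betw \<rho>1 I0 J0" unfolding I0_def J0_def
    by (rule bij_betw_DiffI[OF b1]) (use i0 j0J[unfolded j0_def] in \<open>auto simp: j0_def\<close>)
  obtain \<sigma>1 \<sigma>2 where s1: "bij_betw \<sigma>1 I0 J0" and s2: "bij_betw \<sigma>2 I0 J0"
    and smon: "sym_monomial I0 \<sigma>1 \<noteq> sym_monomial I0 \<sigma>2"
    and sval: "trop_value A I0 \<sigma>2 = trop_value A I0 \<sigma>1"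
    and smin: "\<forall>\<rho>. bij_betw \<rho> I0 J0 \<longrightarrow> trop_value A I0 \<sigma>1 \<le> trop_value A I0 \<rho>"
    using sub unfolding sym_trop_singular_def I0_def J0_def j0_def by blast
  have ext: "bij_betw (\<sigma>(i0 := j0)) I J" if s: "bij_betw \<sigma> I0 J0" for \<sigma>
  proof -
    have "bij_betw (\<sigma>(i0 := j0)) I0 J0" using s by (rule bij_betw_cong[THEN iffD1, rotated]) (auto simp: I0_def)
    then have "bij_betw (\<sigma>(i0 := j0)) (I0 \<union> {i0}) (J0 \<union> {(\<sigma>(i0 := j0)) i0})"
      by (rule notIn_Un_bij_betw[rotated 2]) (auto simp: I0_def J0_def)
    moreover have "I0 \<union> {i0} = I" "J0 \<union> {(\<sigma>(i0 := j0)) i0} = J" using i0 j0J by (auto simp: I0_def J0_def)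
    ultimately show ?thesis by simp
  qed
  have val_ext: "trop_value A I (\<sigma>(i0 := j0)) = A i0 j0 + trop_value A I0 \<sigma>" for \<sigma>
    using trop_value_remove[OF fin i0, of A "\<sigma>(i0 := j0)"]
    using trop_value_cong[of "I - {i0}" "\<sigma>(i0 := j0)" \<sigma>] by (simp add: I0_def)
  have mon_ext: "sym_monomial I (\<sigma>(i0 := j0)) = add_mset {i0, j0} (sym_monomial I0 \<sigma>)" for \<sigma>
    using sym_monomial_remove[OF fin i0, of "\<sigma>(i0 := j0)"]
    using sym_monomial_cong[of "I - {i0}" "\<sigma>(i0 := j0)" \<sigma>] by (simp add: I0_def)
  have val1: "trop_value A I \<rho>1 = A i0 j0 + trop_value A I0 \<rho>1"
    using trop_value_remove[OF fin i0] by (simp add: I0_def j0_def)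
  have mon1: "sym_monomial I \<rho>1 = add_mset {i0, j0} (sym_monomial I0 \<rho>1)"
    using sym_monomial_remove[OF fin i0] by (simp add: I0_def j0_def)
  have "trop_value A I0 \<sigma>1 \<le> trop_value A I0 \<rho>1" using smin b10 by blast
  moreover have "trop_value A I \<rho>1 \<le> trop_value A I (\<sigma>1(i0 := j0))" using min1 ext[OF s1] by blast
  ultimately have eq1: "trop_value A I0 \<sigma>1 = trop_value A I0 \<rho>1" using val1 val_ext[of \<sigma>1] by simp
  obtain \<sigma> where s: "bij_betw \<sigma> I0 J0" and sv: "trop_value A I0 \<sigma> = trop_value A I0 \<rho>1"
    and sm: "sym_monomial I0 \<sigma> \<noteq> sym_monomial I0 \<rho>1"
  proof (cases "sym_monomial I0 \<sigma>1 = sym_monomial I0 \<rho>1")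
    case True
    then show ?thesis using that[OF s2] sval eq1 smon by simp
  next
    case False
    then show ?thesis using that[OF s1] eq1 by simp
  qed
  show ?thesis unfolding sym_trop_singular_def
  proof (intro exI conjI)
    show "bij_betw \<rho>1 I J" by fact
    show "bij_betw (\<sigma>(i0 := j0)) I J" using ext[OF s] .
    show "sym_monomial I \<rho>1 \<noteq> sym_monomial I (\<sigma>(i0 := j0))" using mon1 mon_ext[of \<sigma>] sm by simp
    show "trop_value A I (\<sigma>(i0 := j0)) = trop_value A I \<rho>1" using val_ext[of \<sigma>] val1 sv by simp
    show "\<forall>\<rho>. bij_betw \<rho> I J \<longrightarrow> trop_value A I \<rho>1 \<le> trop_value A I \<rho>" by fact
  qed
qed

section \<open>Sign coherence\<close>

lemma count_symmon: "finite I \<Longrightarrow> count (sym_monomial I \<rho>) e = card {i \<in> I. {i, \<rho> i} = e}"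
  unfolding sym_monomial_def by (rule count_image_mset_eq_card_vimage)

lemma coherence_core:
  assumes fin: "finite I" and b: "bij_betw \<rho> I J" and b': "bij_betw \<rho>' I J"
    and mon: "sym_monomial I \<rho> = sym_monomial I \<rho>'"
  shows "\<exists>\<tau>. \<tau> permutes I \<and> (\<forall>i\<in>I. \<rho>' i = \<rho> (\<tau> (\<tau> i)))"
proof -
  define D where "D = {i \<in> I. \<rho> i \<noteq> \<rho>' i}"
  have cnt: "card {i \<in> I. {i, \<rho> i} = e} = card {i \<in> I. {i, \<rho>' i} = e}" for e
  proof -
    have "count (sym_monomial I \<rho>) e = count (sym_monomial I \<rho>') e" using mon by simp
    then show ?thesis using count_symmon[OF fin, of \<rho> e] count_symmon[OF fin, of \<rho>' e] by simp
  qed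
  have fact1: "\<rho>' i \<in> I \<and> \<rho> (\<rho>' i) = i" if iD: "i \<in> D" for i
  proof -
    have iI: "i \<in> I" and ne: "\<rho> i \<noteq> \<rho>' i" using iD by (auto simp: D_def)
    have "i \<in> {j \<in> I. {j, \<rho>' j} = {i, \<rho>' i}}" using iI by simp
    then have "card {j \<in> I. {j, \<rho>' j} = {i, \<rho>' i}} \<noteq> 0" using fin by auto
    then have "card {j \<in> I. {j, \<rho> j} = {i, \<rho>' i}} \<noteq> 0" using cnt by simp
    then have "{j \<in> I. {j, \<rho> j} = {i, \<rho>' i}} \<noteq> {}" by (intro notI) simp
    then obtain j where j: "j \<in> I" "{j, \<rho> j} = {i, \<rho>' i}" by blast
    have "j \<noteq> i"
    proof
      assume "j = i"
      then have "{i, \<rho> i} = {i, \<rho>' i}" using j by simp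
      then have "\<rho> i = \<rho>' i" by (auto simp: doubleton_eq_iff)
      then show False using ne by simp
    qed
    then have "j = \<rho>' i \<and> \<rho> j = i" using j(2) by (auto simp: doubleton_eq_iff)
    then show ?thesis using j(1) by metis
  qed
  have fact1': "\<rho> (\<rho>' i) = i" if "i \<in> D" for i using fact1[OF that] by simp
  have fact2: "\<rho>' i \<in> D" if iD: "i \<in> D" for i
  proof (rule ccontr)
    assume nD: "\<rho>' i \<notin> D"
    define b where "b = \<rho>' i"
    have bI: "b \<in> I" and rb: "\<rho> b = i" using fact1[OF iD] by (auto simp: b_def)
    have iI: "i \<in> I" and ne: "\<rho> i \<noteq> \<rho>' i" using iD by (auto simp: D_def)
    have bi: "b \<noteq> i" using rb ne b_def by auto
    have "b \<notin> D" using nD by (simp add: b_def)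
    then have r'b: "\<rho>' b = i" using bI rb by (simp add: D_def)
    have "{i, b} \<subseteq> {j \<in> I. {j, \<rho>' j} = {i, b}}" using iI bI r'b by (auto simp: b_def insert_commute)
    then have "card {i, b} \<le> card {j \<in> I. {j, \<rho>' j} = {i, b}}" using fin by (intro card_mono) auto
    moreover have "card {i, b} = 2" using bi by simp
    ultimately have c2: "2 \<le> card {j \<in> I. {j, \<rho> j} = {i, b}}" using cnt by simp
    have sub: "{j \<in> I. {j, \<rho> j} = {i, b}} \<subseteq> {b}"
    proof
      fix j assume "j \<in> {j \<in> I. {j, \<rho> j} = {i, b}}"
      then have j: "{j, \<rho> j} = {i, b}" by simp
      show "j \<in> {b}"
      proof (rule ccontr)
        assume "j \<notin> {b}"
        then have "j = i" using j by (auto simp: doubleton_eq_iff)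
        then have "\<rho> i = b" using j bi by (auto simp: doubleton_eq_iff)
        then show False using ne b_def by simp
      qed
    qed
    have "card {j \<in> I. {j, \<rho> j} = {i, b}} \<le> card {b}" by (rule card_mono[OF _ sub]) simp
    then show False using c2 by simp
  qed
  define \<tau> where "\<tau> = (\<lambda>x. if x \<in> D then \<rho>' x else x)"
  have DI: "D \<subseteq> I" by (auto simp: D_def)
  have tI: "\<tau> x \<in> I" if "x \<in> I" for x using that fact1 by (auto simp: \<tau>_def)
  have inj: "inj_on \<tau> I"
  proof (rule inj_onI)
    fix x y assume xy: "x \<in> I" "y \<in> I" "\<tau> x = \<tau> y"
    show "x = y"
    proof (cases "x \<in> D"; cases "y \<in> D")
      assume "x \<in> D" "y \<in> D"
      then have "\<rho> (\<rho>' x) = x" "\<rho> (\<rho>' y) = y" using fact1' by auto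
      moreover have "\<rho>' x = \<rho>' y" using xy \<open>x \<in> D\<close> \<open>y \<in> D\<close> by (simp add: \<tau>_def)
      ultimately show ?thesis by metis
    next
      assume "x \<in> D" "y \<notin> D"
      then show ?thesis using xy fact2[of x] by (auto simp: \<tau>_def)
    next
      assume "x \<notin> D" "y \<in> D"
      then show ?thesis using xy fact2[of y] by (auto simp: \<tau>_def)
    next
      assume "x \<notin> D" "y \<notin> D"
      then show ?thesis using xy by (simp add: \<tau>_def)
    qed
  qed
  have "\<tau> ` I = I" using endo_inj_surj[OF fin _ inj] tI by blast
  then have "bij_betw \<tau> I I" using inj by (simp add: bij_betw_def)
  then have perm: "\<tau> permutes I" by (rule bij_imp_permutes) (use DI in \<open>auto simp: \<tau>_def\<close>)
  have "\<forall>i\<in>I. \<rho>' i = \<rho> (\<tau> (\<tau> i))"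
  proof
    fix i assume iI: "i \<in> I"
    show "\<rho>' i = \<rho> (\<tau> (\<tau> i))"
    proof (cases "i \<in> D")
      case True
      then have "\<tau> i = \<rho>' i" "\<rho>' i \<in> D" using fact2 by (auto simp: \<tau>_def)
      then show ?thesis using fact1'[of "\<rho>' i"] by (simp add: \<tau>_def)
    next
      case False
      then show ?thesis using iI by (simp add: \<tau>_def D_def)
    qed
  qed
  then show ?thesis using perm by blast
qed



lemma sign_coh:
  assumes fI: "finite I" and fJ: "finite J" and cI: "card I = r" and cJ: "card J = r"
    and p: "p permutes {..<r}" and p': "p' permutes {..<r}"
    and mon: "image_mset (\<lambda>k. {en I k, en J (p k)}) (mset_set {..<r}) =
              image_mset (\<lambda>k. {en I k, en J (p' k)}) (mset_set {..<r})"
  shows "sign p = sign p'"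
proof -
  let ?\<rho> = "rho I J p" and ?\<rho>' = "rho I J p'"
  have m: "sym_monomial I (rho I J q) = image_mset (\<lambda>k. {en I k, en J (q k)}) (mset_set {..<r})" for q
    unfolding sym_monomial_idx[OF fI] cI by (rule image_mset_cong) (simp add: rho_en[OF fI] cI)
  have "sym_monomial I ?\<rho> = sym_monomial I ?\<rho>'" using mon m by simp
  then obtain \<tau> where tau: "\<tau> permutes I" and rt: "\<forall>i\<in>I. ?\<rho>' i = ?\<rho> (\<tau> (\<tau> i))"
    using coherence_core[OF fI rho_bij[OF fI fJ cI cJ p] rho_bij[OF fI fJ cI cJ p']] by blast
  define t where "t = perm_of I I \<tau>"
  have tb: "bij_betw \<tau> I I" using tau by (rule permutes_imp_bij)
  have tp: "t permutes {..<r}" unfolding t_def by (rule perm_of_permutes[OF fI fI cI cI tb])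
  have tI: "\<tau> i \<in> I" if "i \<in> I" for i using tau that by (simp add: permutes_in_image)
  have teq: "en I (t k) = \<tau> (en I k)" if "k < r" for k
    using that en_in[OF fI] en_ix[OF fI] tI cI by (simp add: t_def perm_of_def)
  have tlt: "t k < r" if "k < r" for k using permutes_in_image[OF tp, of k] that by simp
  have "p' = p \<circ> (t \<circ> t)"
  proof
    fix k
    show "p' k = (p \<circ> (t \<circ> t)) k"
    proof (cases "k < r")
      case True
      have ek: "en I k \<in> I" using en_in[OF fI] True cI by simp
      have "en J (p' k) = ?\<rho>' (en I k)" using rho_en[OF fI] True cI by simp
      also have "\<dots> = ?\<rho> (\<tau> (\<tau> (en I k)))" using rt ek by blast
      also have "\<tau> (\<tau> (en I k)) = en I (t (t k))" using teq[OF True] teq[OF tlt[OF True]] by simp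
      also have "?\<rho> (en I (t (t k))) = en J (p (t (t k)))" using rho_en[OF fI] tlt[OF tlt[OF True]] cI by simp
      finally have "en J (p' k) = en J (p (t (t k)))" .
      moreover have "p' k < r" using permutes_in_image[OF p', of k] True by simp
      moreover have "p (t (t k)) < r" using permutes_in_image[OF p, of "t (t k)"] tlt[OF tlt[OF True]] by simp
      ultimately show ?thesis using en_inj[OF fJ] cJ by simp
    next
      case False
      then have "t k = k" "p k = k" "p' k = k" using tp p p' by (auto simp: permutes_def)
      then show ?thesis by simp
    qed
  qed
  moreover have "permutation p" "permutation t" using p tp by (auto simp: permutation_permutes)
  ultimately have "sign p' = sign p * (sign t * sign t)"
    by (simp add: sign_compose permutation_compose)
  then show ?thesis by (simp add: sign_idempotent)
qed

definition hd :: "hs \<Rightarrow> real" where "hd x = hdeg (hrep x)"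
definition lcf :: "hs \<Rightarrow> complex" where "lcf x = hrep x (hd x)"

lemma hs_nz: "x \<noteq> 0 \<Longrightarrow> hrep x \<noteq> hzero" using hrep_eq0 by blast

lemma lcf_nz: "x \<noteq> 0 \<Longrightarrow> lcf x \<noteq> 0"
  unfolding lcf_def hd_def using hdeg_ex[OF hrep_hahn hs_nz] by blast

lemma below_hd: "g < hd x \<Longrightarrow> hrep x g = 0"
  unfolding hd_def using hdeg_low[OF hrep_hahn] by blast

lemma mult_hd: "x \<noteq> 0 \<Longrightarrow> y \<noteq> 0 \<Longrightarrow> hd (x * y) = hd x + hd y \<and> lcf (x * y) = lcf x * lcf y"
  unfolding lcf_def hd_def hrep_mult
  using hmul_nonzero(2)[OF hrep_hahn hrep_hahn hs_nz hs_nz] hmul_deg(1)[OF hrep_hahn hrep_hahn hs_nz hs_nz]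
  by simp

lemma prod_hd:
  assumes "finite F" "\<And>i. i \<in> F \<Longrightarrow> f i \<noteq> 0"
  shows "prod f F \<noteq> 0 \<and> hd (prod f F) = (\<Sum>i\<in>F. hd (f i)) \<and> lcf (prod f F) = (\<Prod>i\<in>F. lcf (f i))"
  using assms
proof (induction F rule: finite_induct)
  case empty
  have "hd 1 = 0" unfolding hd_def hrep_one by (rule hdeg_eq) (auto simp: hone_def)
  then show ?case by (simp add: lcf_def hrep_one hone_def)
next
  case (insert x F)
  then have "f x \<noteq> 0" "prod f F \<noteq> 0" by auto
  then show ?case using insert mult_hd[of "f x" "prod f F"] by simp
qed



lemma habs_nz: "is_hahn a \<Longrightarrow> a \<noteq> hzero \<Longrightarrow> habs a \<noteq> 0"
  using hrep_habs hrep_zero by metis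

lemma LS:
  assumes lift: "symmetric_lift n A L" and rk: "rank_le_pred n r L"
    and I: "I \<subseteq> {..<n}" and J: "J \<subseteq> {..<n}" and cI: "card I = r" and cJ: "card J = r"
  shows "sym_trop_singular A I J"
proof (rule ccontr)
  assume ns: "\<not> sym_trop_singular A I J"
  have fI: "finite I" using I finite_subset by blast
  have fJ: "finite J" using J finite_subset by blast
  have Lh: "is_hahn (L i j)" "L i j \<noteq> hzero" "hdeg (L i j) = A i j" if "i < n" "j < n" for i j
    using lift that unfolding symmetric_lift_def by auto
  have Ls: "L i j = L j i" if "i < n" "j < n" for i j
    using lift that unfolding symmetric_lift_def symmetric_mat_def by auto
  have As: "A i j = A j i" if "i < n" "j < n" for i j using Lh(3)[OF that] Lh(3)[OF that(2,1)] Ls[OF that] by simp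
  have enI: "en I k < n" if "k < r" for k using en_in[OF fI, of k] that cI I by auto
  have enJ: "en J k < n" if "k < r" for k using en_in[OF fJ, of k] that cJ J by auto
  define M where "M = (\<lambda>k l. L (en I k) (en J l))"
  have Mh: "is_hahn (M k l)" "M k l \<noteq> hzero" "hdeg (M k l) = A (en I k) (en J l)" if "k < r" "l < r" for k l
    using Lh[OF enI[OF that(1)] enJ[OF that(2)]] by (auto simp: M_def)
  have hm: "hminor L I J = hdet r M" unfolding hminor_def M_def en_def cI by simp
  have zero: "hminor L I J = hzero" using rk I J cI cJ unfolding rank_le_pred_def by blast
  let ?P = "{p. p permutes {..<r}}"
  define X where "X = (\<lambda>p. \<Prod>i = 0..<r. habs (M i (p i)))"
  define val where "val = (\<lambda>p. \<Sum>k<r. A (en I k) (en J (p k)))"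
  define mon where "mon = (\<lambda>p. image_mset (\<lambda>k. {en I k, en J (p k)}) (mset_set {..<r}))"
  define lcL where "lcL = (\<lambda>a b. L a b (A a b))"
  define h where "h = (\<lambda>e. lcL (Min e) (Max e))"
  have plt: "p k < r" if "p \<in> ?P" "k < r" for p k using that permutes_in_image[of p "{..<r}" k] by simp
  have Xprop: "X p \<noteq> 0 \<and> hd (X p) = val p \<and> lcf (X p) = prod_mset (image_mset h (mon p))" if pP: "p \<in> ?P" for p
  proof -
    have nz: "habs (M i (p i)) \<noteq> 0" if "i \<in> {0..<r}" for i
      using Mh[of i "p i"] plt[OF pP, of i] that habs_nz by auto
    have hd1: "hd (habs (M i (p i))) = A (en I i) (en J (p i))" if "i \<in> {0..<r}" for i
      using Mh[of i "p i"] plt[OF pP, of i] that by (simp add: hd_def hrep_habs)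
    have lc1: "lcf (habs (M i (p i))) = h {en I i, en J (p i)}" if "i \<in> {0..<r}" for i
    proof -
      have i: "i < r" "p i < r" using that plt[OF pP, of i] by auto
      have "lcf (habs (M i (p i))) = lcL (en I i) (en J (p i))"
        using Mh[OF i] by (simp add: lcf_def hd_def hrep_habs lcL_def M_def)
      also have "\<dots> = h {en I i, en J (p i)}"
        using Ls[OF enI[OF i(1)] enJ[OF i(2)]] As[OF enI[OF i(1)] enJ[OF i(2)]]
        by (cases "en I i \<le> en J (p i)") (auto simp: h_def lcL_def min_def max_def)
      finally show ?thesis .
    qed
    have "(\<Prod>i\<in>{0..<r}. lcf (habs (M i (p i)))) = (\<Prod>i\<in>{..<r}. h {en I i, en J (p i)})"
      using lc1 by (simp add: atLeast0LessThan)
    also have "\<dots> = prod_mset (image_mset h (mon p))"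
      unfolding mon_def prod_unfold_prod_mset by (simp add: multiset.map_comp o_def)
    finally have "(\<Prod>i\<in>{0..<r}. lcf (habs (M i (p i)))) = prod_mset (image_mset h (mon p))" .
    moreover have "(\<Sum>i\<in>{0..<r}. hd (habs (M i (p i)))) = val p"
      using hd1 by (simp add: val_def atLeast0LessThan)
    ultimately show ?thesis using prod_hd[of "{0..<r}" "\<lambda>i. habs (M i (p i))"] nz unfolding X_def by simp
  qed
  have valtv: "val p = trop_value A I (rho I J p)" for p
    unfolding val_def trop_value_idx[OF fI] cI by (rule sum.cong) (auto simp: rho_en[OF fI] cI)
  have montv: "mon p = sym_monomial I (rho I J p)" for p
    unfolding mon_def sym_monomial_idx[OF fI] cI by (rule image_mset_cong) (simp add: rho_en[OF fI] cI)
  obtain \<rho>1 where b1: "bij_betw \<rho>1 I J"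
    and min1: "\<forall>\<rho>. bij_betw \<rho> I J \<longrightarrow> trop_value A I \<rho>1 \<le> trop_value A I \<rho>"
    using min_exists[OF fI fJ] cI cJ by fastforce
  define p0 where "p0 = perm_of I J \<rho>1"
  have p0P: "p0 \<in> ?P" using perm_of_permutes[OF fI fJ cI cJ b1] by (simp add: p0_def)
  have r0: "rho I J p0 i = \<rho>1 i" if "i \<in> I" for i
    using rho_perm_of[OF fI fJ _ b1 that] cI cJ by (simp add: p0_def)
  have val0: "val p0 = trop_value A I \<rho>1" unfolding valtv by (rule trop_value_cong) (simp add: r0)
  have mon0: "mon p0 = sym_monomial I \<rho>1" unfolding montv by (rule sym_monomial_cong) (simp add: r0)
  have minp: "val p0 \<le> val p" if "p \<in> ?P" for p
    using min1 rho_bij[OF fI fJ cI cJ, of p] that val0 valtv[of p] by simp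
  have same: "mon p = mon p0" if pP: "p \<in> ?P" and v: "val p = val p0" for p
  proof (rule ccontr)
    assume "mon p \<noteq> mon p0"
    then have "sym_trop_singular A I J" unfolding sym_trop_singular_def
      using b1 rho_bij[OF fI fJ cI cJ, of p] pP min1 v val0 valtv[of p] mon0 montv[of p]
      by (intro exI[of _ \<rho>1] exI[of _ "rho I J p"]) auto
    then show False using ns by simp
  qed
  have sgn: "sign p = sign p0" if "p \<in> ?P" "val p = val p0" for p
    using sign_coh[OF fI fJ cI cJ, of p p0] same[OF that] that p0P unfolding mon_def by simp
  define m where "m = val p0"
  have trm: "of_int (sign p) * hrep (X p) m = (if val p = m then of_int (sign p0) * lcf (X p0) else 0)"
    if pP: "p \<in> ?P" for p
  proof (cases "val p = m")
    case True
    then have "hrep (X p) m = lcf (X p)" using Xprop[OF pP] by (simp add: lcf_def)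
    also have "\<dots> = lcf (X p0)" using Xprop[OF pP] Xprop[OF p0P] same[OF pP] True by (simp add: m_def)
    finally show ?thesis using sgn[OF pP] True by (simp add: m_def)
  next
    case False
    then have "m < hd (X p)" using Xprop[OF pP] minp[OF pP] by (simp add: m_def)
    then show ?thesis using below_hd False by simp
  qed
  have "hdet r M m = (\<Sum>p\<in>?P. of_int (sign p) * hrep (X p) m)"
    using hdet_sum[of r M] Mh(1) unfolding X_def by simp
  also have "\<dots> = (\<Sum>p\<in>?P. if val p = m then of_int (sign p0) * lcf (X p0) else 0)"
    by (rule sum.cong) (simp_all add: trm)
  also have "\<dots> = of_nat (card {p \<in> ?P. val p = m}) * (of_int (sign p0) * lcf (X p0))"
    by (simp add: sum.If_cases finite_permutations Int_def)
  finally have ev: "hdet r M m = of_nat (card {p \<in> ?P. val p = m}) * (of_int (sign p0) * lcf (X p0))" .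
  have "card {p \<in> ?P. val p = m} \<noteq> 0"
    using p0P by (simp add: m_def finite_permutations card_eq_0_iff) blast
  moreover have "of_int (sign p0) \<noteq> (0::complex)" by (simp add: sign_def)
  moreover have "lcf (X p0) \<noteq> 0" using lcf_nz Xprop[OF p0P] by blast
  ultimately have "hdet r M m \<noteq> 0" using ev by simp
  moreover have "hdet r M m = 0" using zero hm by (simp add: hzero_def)
  ultimately show False by simp
qed



lemma sorted_ins:
  assumes "finite I" "\<And>x. x \<in> I \<Longrightarrow> x < n"
  shows "sorted_list_of_set (insert n I) = sorted_list_of_set I @ [n]"
proof (rule sorted_distinct_set_unique)
  show "sorted (sorted_list_of_set I @ [n])" using assms by (auto simp: sorted_append less_imp_le)
  show "distinct (sorted_list_of_set I @ [n])" using assms by auto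
  show "sorted (sorted_list_of_set (insert n I))" by (rule sorted_sorted_list_of_set)
  show "distinct (sorted_list_of_set (insert n I))" by (rule distinct_sorted_list_of_set)
  have "set (sorted_list_of_set (insert n I)) = insert n I" using assms(1) by (simp only: set_sorted_list_of_set finite_insert)
  moreover have "set (sorted_list_of_set I @ [n]) = insert n I" using assms(1) by (simp only: set_sorted_list_of_set set_append) auto
  ultimately show "set (sorted_list_of_set (insert n I)) = set (sorted_list_of_set I @ [n])" by simp
qed

lemma hdet_cong:
  assumes "\<And>k l. k < r \<Longrightarrow> l < r \<Longrightarrow> M k l = M' k l"
  shows "hdet r M = hdet r M'"
  unfolding hdet_def
proof (intro ext sum.cong refl arg_cong2[where f = "(*)"])
  fix g p assume p: "p \<in> {p. p permutes {..<r}}"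
  have mp: "map (\<lambda>k. M k (p k)) [0..<r] = map (\<lambda>k. M' k (p k)) [0..<r]"
  proof (rule map_cong[OF refl])
    fix k assume "k \<in> set [0..<r]"
    then have "k < r" "p k < r" using permutes_in_image[of p "{..<r}" k] p by auto
    then show "M k (p k) = M' k (p k)" using assms by simp
  qed
  show "foldr hmul (map (\<lambda>k. M k (p k)) [0..<r]) hone g = foldr hmul (map (\<lambda>k. M' k (p k)) [0..<r]) hone g"
    by (simp only: mp)
qed

lemma sts_cong1:
  assumes eq: "\<And>i j. i \<in> I \<Longrightarrow> j \<in> J \<Longrightarrow> A i j = B i j" and s: "sym_trop_singular A I J"
  shows "sym_trop_singular B I J"
proof -
  have key: "trop_value A I \<rho> = trop_value B I \<rho>" if "bij_betw \<rho> I J" for \<rho>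
    unfolding trop_value_def using that eq by (intro sum.cong) (auto simp: bij_betw_def)
  obtain \<rho>1 \<rho>2 where r: "bij_betw \<rho>1 I J" "bij_betw \<rho>2 I J" "sym_monomial I \<rho>1 \<noteq> sym_monomial I \<rho>2"
    "trop_value A I \<rho>2 = trop_value A I \<rho>1" "\<forall>\<rho>. bij_betw \<rho> I J \<longrightarrow> trop_value A I \<rho>1 \<le> trop_value A I \<rho>"
    using s unfolding sym_trop_singular_def by blast
  show ?thesis unfolding sym_trop_singular_def
  proof (intro exI conjI allI impI)
    show "bij_betw \<rho>1 I J" "bij_betw \<rho>2 I J" "sym_monomial I \<rho>1 \<noteq> sym_monomial I \<rho>2" using r by auto
    show "trop_value B I \<rho>2 = trop_value B I \<rho>1" using r key by metis
    fix \<rho> assume "bij_betw \<rho> I J"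
    then show "trop_value B I \<rho>1 \<le> trop_value B I \<rho>" using r key by metis
  qed
qed

lemma sts_empty: "\<not> sym_trop_singular A {} {}"
  unfolding sym_trop_singular_def sym_monomial_def by simp

theorem main_step:
  assumes A: "symmetric_mat n A"
    and lhs: "\<forall>I J. I \<subseteq> {..<n} \<longrightarrow> J \<subseteq> {..<n} \<longrightarrow> card I = r \<longrightarrow> card J = r \<longrightarrow> sym_trop_singular A I J"
    and rhs: "\<not> (\<exists>L. symmetric_lift n A L \<and> rank_le_pred n r L)"
  shows "\<not> sym_minors_tropical_basis (n + 1) (r + 1)"
proof -
  have r1: "r \<noteq> 0"
  proof
    assume "r = 0"
    then have "sym_trop_singular A {} {}" using lhs by auto
    then show False using sts_empty by blast
  qed
  define N :: real where "N = 1 + (\<Sum>i<n. \<Sum>j<n. \<bar>A i j\<bar>)"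
  have AN: "A i j < N" if "i < n" "j < n" for i j
  proof -
    have "\<bar>A i j\<bar> \<le> (\<Sum>j<n. \<bar>A i j\<bar>)" using that by (intro member_le_sum) auto
    also have "\<dots> \<le> (\<Sum>i<n. \<Sum>j<n. \<bar>A i j\<bar>)" using that
      by (intro member_le_sum[of i "{..<n}" "\<lambda>i. \<Sum>j<n. \<bar>A i j\<bar>"]) (auto intro: sum_nonneg)
    finally show ?thesis unfolding N_def by linarith
  qed
  have Npos: "0 < N" unfolding N_def by (smt (verit) sum_nonneg abs_ge_zero)
  define A' where "A' = (\<lambda>i j. if i = n \<and> j = n then 0 else if i = n \<or> j = n then N else A i j)"
  have A'A: "A' i j = A i j" if "i < n" "j < n" for i j using that by (simp add: A'_def)
  have symA': "symmetric_mat (n + 1) A'"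
    using A unfolding symmetric_mat_def A'_def by auto
  have subsing: "sym_trop_singular A' I0 J0" if I0: "I0 \<subseteq> {..<n}" and J0: "J0 \<subseteq> {..<n}"
    and c0: "card I0 = r" "card J0 = r" for I0 J0
  proof (rule sts_cong1[of I0 J0 A])
    fix i j assume ij: "i \<in> I0" "j \<in> J0"
    then have "i < n" "j < n" using I0 J0 by auto
    then show "A i j = A' i j" using A'A by simp
  next
    show "sym_trop_singular A I0 J0" using lhs I0 J0 c0 by blast
  qed
  have lhs': "sym_trop_singular A' I J" if I: "I \<subseteq> {..<n + 1}" and J: "J \<subseteq> {..<n + 1}"
    and cI: "card I = r + 1" and cJ: "card J = r + 1" for I J
  proof -
    have fI: "finite I" using I finite_subset by blast
    have fJ: "finite J" using J finite_subset by blast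
    obtain \<rho>1 where b1: "bij_betw \<rho>1 I J"
      and min1: "\<forall>\<rho>. bij_betw \<rho> I J \<longrightarrow> trop_value A' I \<rho>1 \<le> trop_value A' I \<rho>"
      using min_exists[OF fI fJ] cI cJ by fastforce
    have img: "\<rho>1 i \<in> J" if "i \<in> I" for i using b1 that by (auto simp: bij_betw_def)
    have pre: "\<exists>i\<in>I. \<rho>1 i = j" if "j \<in> J" for j using b1 that by (auto simp: bij_betw_def)
    have cardsub: "card (I - {i0}) = r" "card (J - {\<rho>1 i0}) = r" if "i0 \<in> I" for i0
      using cI cJ fI fJ that img[OF that] by auto
    have go: "sym_trop_singular A' I J" if i0: "i0 \<in> I" and sI: "I - {i0} \<subseteq> {..<n}" and sJ: "J - {\<rho>1 i0} \<subseteq> {..<n}" for i0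
      by (rule ext_sing[OF fI i0 b1 min1 subsing[OF sI sJ cardsub[OF i0]]])
    have subI: "I - {n} \<subseteq> {..<n}" and subJ: "J - {n} \<subseteq> {..<n}" using I J by (auto simp: less_Suc_eq)
    have subI': "I \<subseteq> {..<n}" if "n \<notin> I" using subI that by auto
    have subJ': "J \<subseteq> {..<n}" if "n \<notin> J" using subJ that by auto
    show ?thesis
    proof (cases "n \<in> I"; cases "n \<in> J")
      assume nI: "n \<in> I" and nJ: "n \<in> J"
      have "\<rho>1 n = n"
      proof (rule ccontr)
        assume ne: "\<rho>1 n \<noteq> n"
        define j where "j = \<rho>1 n"
        obtain i where iI: "i \<in> I" and ri: "\<rho>1 i = n" using pre[OF nJ] by blast
        have "i \<noteq> n" using ri ne by auto
        then have il: "i < n" using iI I by auto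
        have jl: "j < n" using img[OF nI] J ne by (auto simp: j_def)
        define \<rho>' where "\<rho>' = \<rho>1 \<circ> Transposition.transpose i n"
        have b': "bij_betw \<rho>' I J" unfolding \<rho>'_def
          by (rule bij_betw_trans[OF permutes_imp_bij[OF permutes_swap_id[OF iI nI]] b1])
        have in': "i \<in> I - {n}" using iI \<open>i \<noteq> n\<close> by simp
        have fin': "finite (I - {n})" using fI by simp
        have split: "trop_value A' I \<rho> = A' n (\<rho> n) + A' i (\<rho> i) + trop_value A' (I - {n} - {i}) \<rho>" for \<rho>
          using trop_value_remove[OF fI nI, of A' \<rho>] trop_value_remove[OF fin' in', of A' \<rho>] by simp
        have rest: "trop_value A' (I - {n} - {i}) \<rho>' = trop_value A' (I - {n} - {i}) \<rho>1"
          by (rule trop_value_cong) (simp add: \<rho>'_def)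
        have "trop_value A' I \<rho>' = A' n n + A' i j + trop_value A' (I - {n} - {i}) \<rho>1"
          using split[of \<rho>'] rest ri by (simp add: \<rho>'_def j_def)
        moreover have "trop_value A' I \<rho>1 = A' n j + A' i n + trop_value A' (I - {n} - {i}) \<rho>1"
          using split[of \<rho>1] ri by (simp add: j_def)
        moreover have "A' n n = 0" "A' n j = N" "A' i n = N" "A' i j < N"
          using il jl AN[OF il jl] by (auto simp: A'_def)
        ultimately have "trop_value A' I \<rho>' < trop_value A' I \<rho>1" using Npos by simp
        then show False using min1 b' by fastforce
      qed
      then show ?thesis using go[OF nI] subI subJ by simp
    next
      assume nI: "n \<in> I" and nJ: "n \<notin> J"
      show ?thesis using go[OF nI] subI subJ'[OF nJ] by auto
    next
      assume nI: "n \<notin> I" and nJ: "n \<in> J"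
      obtain i where iI: "i \<in> I" and ri: "\<rho>1 i = n" using pre[OF nJ] by blast
      show ?thesis using go[OF iI] subI'[OF nI] subJ ri by auto
    next
      assume nI: "n \<notin> I" and nJ: "n \<notin> J"
      have "I \<noteq> {}" using cI by auto
      then obtain i where iI: "i \<in> I" by blast
      show ?thesis using go[OF iI] subI'[OF nI] subJ'[OF nJ] by auto
    qed
  qed
  have rhs': "\<not> (\<exists>L'. symmetric_lift (n + 1) A' L' \<and> rank_le_pred (n + 1) (r + 1) L')"
  proof
    assume "\<exists>L'. symmetric_lift (n + 1) A' L' \<and> rank_le_pred (n + 1) (r + 1) L'"
    then obtain L' where lift': "symmetric_lift (n + 1) A' L'" and rk': "rank_le_pred (n + 1) (r + 1) L'" by blast
    have Lh: "is_hahn (L' i j)" "L' i j \<noteq> hzero" "hdeg (L' i j) = A' i j" if "i \<le> n" "j \<le> n" for i j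
      using lift' that unfolding symmetric_lift_def by auto
    have Ls: "L' i j = L' j i" if "i \<le> n" "j \<le> n" for i j
      using lift' that unfolding symmetric_lift_def symmetric_mat_def by auto
    define c where "c = L' n n"
    define L where "L = (\<lambda>i j g. hmul c (L' i j) g - hmul (L' i n) (L' n j) g)"
    have Lhahn: "is_hahn (L i j)" if "i < n" "j < n" for i j
      unfolding L_def c_def using that by (intro hahn_diff hahn_hmul Lh) auto
    have Ldeg: "L i j \<noteq> hzero \<and> hdeg (L i j) = A i j" if ij: "i < n" "j < n" for i j
    proof -
      have c: "is_hahn c" "c \<noteq> hzero" "hdeg c = 0" using Lh[of n n] by (auto simp: c_def A'_def)
      have u: "hmul c (L' i j) \<noteq> hzero" "hdeg (hmul c (L' i j)) = A i j"
        using hmul_nonzero[OF c(1) Lh(1)[of i j] c(2) Lh(2)[of i j]] ij c(3) Lh(3)[of i j] A'A[OF ij] by auto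
      have v: "hdeg (hmul (L' i n) (L' n j)) = N + N"
        using hmul_nonzero(2)[OF Lh(1)[of i n] Lh(1)[of n j] Lh(2)[of i n] Lh(2)[of n j]] ij Lh(3)[of i n] Lh(3)[of n j]
        by (auto simp: A'_def)
      have lt: "hdeg (hmul c (L' i j)) < hdeg (hmul (L' i n) (L' n j))" using u(2) v AN[OF ij] Npos by simp
      show ?thesis
        using hdeg_diff[OF hahn_hmul[OF c(1) Lh(1)[of i j]] hahn_hmul[OF Lh(1)[of i n] Lh(1)[of n j]] u(1) lt] ij u(2)
        by (auto simp: L_def)
    qed
    have Lsym: "symmetric_mat n L" unfolding symmetric_mat_def
    proof (intro allI impI)
      fix i j assume ij: "i < n" "j < n"
      show "L i j = L j i" unfolding L_def
        using Ls[of i j] Ls[of i n] Ls[of n j] ij hmul_comm[of "L' i n" "L' n j"] by auto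
    qed
    have liftL: "symmetric_lift n A L" unfolding symmetric_lift_def using Lsym Lhahn Ldeg by auto
    have rkL: "rank_le_pred n r L" unfolding rank_le_pred_def
    proof (intro allI impI)
      fix I J assume I: "I \<subseteq> {..<n}" and J: "J \<subseteq> {..<n}" and cI: "card I = r" and cJ: "card J = r"
      have fI: "finite I" using I finite_subset by blast
      have fJ: "finite J" using J finite_subset by blast
      have nI: "n \<notin> I" "n \<notin> J" using I J by auto
      let ?I = "insert n I" and ?J = "insert n J"
      have cI': "card ?I = r + 1" "card ?J = r + 1" using cI cJ fI fJ nI by auto
      have IJs: "?I \<subseteq> {..<n + 1}" "?J \<subseteq> {..<n + 1}" using I J by auto
      have z': "hminor L' ?I ?J = hzero" using rk' IJs cI' unfolding rank_le_pred_def by blast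
      have sI: "sorted_list_of_set ?I = sorted_list_of_set I @ [n]" using sorted_ins[OF fI] I by auto
      have sJ: "sorted_list_of_set ?J = sorted_list_of_set J @ [n]" using sorted_ins[OF fJ] J by auto
      have lI: "length (sorted_list_of_set I) = r" "length (sorted_list_of_set J) = r" using cI cJ by auto
      have eI: "sorted_list_of_set I ! k < n" if "k < r" for k using en_in[OF fI, of k] that cI I by (auto simp: en_def)
      have eJ: "sorted_list_of_set J ! k < n" if "k < r" for k using en_in[OF fJ, of k] that cJ J by (auto simp: en_def)
      define F where "F = (\<lambda>k. if k < r then sorted_list_of_set I ! k else n)"
      define G where "G = (\<lambda>k. if k < r then sorted_list_of_set J ! k else n)"
      have FI: "sorted_list_of_set ?I ! k = F k" if "k < r + 1" for k
        using that unfolding sI F_def by (auto simp: nth_append cI)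
      have GJ: "sorted_list_of_set ?J ! k = G k" if "k < r + 1" for k
        using that unfolding sJ G_def by (auto simp: nth_append cJ)
      have Fn: "F k \<le> n" "G k \<le> n" for k using eI eJ by (auto simp: F_def G_def less_imp_le)
      let ?Mp = "mat (r + 1) (r + 1) (\<lambda>(k, l). habs (L' (F k) (G l)))"
      have hm': "hminor L' ?I ?J = hrep (det ?Mp)"
      proof -
        have "hminor L' ?I ?J = hdet (r + 1) (\<lambda>k l. L' (F k) (G l))"
          unfolding hminor_def cI'(1) by (rule hdet_cong) (simp add: FI GJ)
        also have "\<dots> = hrep (det ?Mp)" by (rule hdet_rep) (use Lh(1) Fn in auto)
        finally show ?thesis .
      qed
      let ?Bm = "mat r r (\<lambda>(k, l). habs (L' (F k) (G l)))"
      let ?xm = "mat r 1 (\<lambda>(k, l). habs (L' (F k) n))"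
      let ?ym = "mat 1 r (\<lambda>(k, l). habs (L' n (G l)))"
      let ?cc = "habs c"
      have Mp: "?Mp = four_block_mat ?Bm ?xm ?ym (?cc \<cdot>\<^sub>m 1\<^sub>m 1)"
        by (rule eq_matI) (auto simp: F_def G_def c_def)
      have dz: "det ?Mp = 0" using z' hm' hrep_eq0 by simp
      let ?Mr = "mat r r (\<lambda>(k, l). habs (L (F k) (G l)))"
      have hm: "hminor L I J = hrep (det ?Mr)"
      proof -
        have "hminor L I J = hdet r (\<lambda>k l. L (F k) (G l))"
          unfolding hminor_def cI by (rule hdet_cong) (simp add: F_def G_def)
        also have "\<dots> = hrep (det ?Mr)" by (rule hdet_rep) (use Lhahn eI eJ in \<open>auto simp: F_def G_def\<close>)
        finally show ?thesis .
      qed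
      have entry: "habs (L a b) = ?cc * habs (L' a b) - habs (L' a n) * habs (L' n b)" if "a < n" "b < n" for a b
      proof -
        have "hrep (?cc * habs (L' a b) - habs (L' a n) * habs (L' n b)) = L a b"
          using that Lh(1)[of n n] Lh(1)[of a b] Lh(1)[of a n] Lh(1)[of n b]
          by (simp add: hrep_diff hrep_mult hrep_habs L_def c_def)
        then show ?thesis by (metis hrep_inverse)
      qed
      have Mr: "?Mr = ?cc \<cdot>\<^sub>m ?Bm - ?xm * ?ym"
      proof (rule eq_matI)
        fix k l assume kl: "k < dim_row (?cc \<cdot>\<^sub>m ?Bm - ?xm * ?ym)" "l < dim_col (?cc \<cdot>\<^sub>m ?Bm - ?xm * ?ym)"
        then have k: "k < r" and l: "l < r" by auto
        have "F k < n" "G l < n" using eI[OF k] eJ[OF l] k l by (auto simp: F_def G_def)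
        then show "?Mr $$ (k, l) = (?cc \<cdot>\<^sub>m ?Bm - ?xm * ?ym) $$ (k, l)"
          using k l entry by (simp add: scalar_prod_def)
      qed auto
      have "det (four_block_mat ?Bm ?xm ?ym (?cc \<cdot>\<^sub>m 1\<^sub>m 1)) * ?cc ^ r = det (?cc \<cdot>\<^sub>m ?Bm - ?xm * ?ym) * ?cc"
        by (rule chio) auto
      then have "det (?cc \<cdot>\<^sub>m ?Bm - ?xm * ?ym) * ?cc = 0" using dz Mp by simp
      moreover have "?cc \<noteq> 0" using habs_nz Lh(1,2)[of n n] by (simp add: c_def)
      ultimately have "det ?Mr = 0" using Mr by simp
      then show "hminor L I J = hzero" using hm hrep_zero by simp
    qed
    show False using rhs liftL rkL by blast
  qed
  show ?thesis unfolding sym_minors_tropical_basis_def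
  proof
    assume "\<forall>A. symmetric_mat (n + 1) A \<longrightarrow>
      ((\<forall>I J. I \<subseteq> {..<n + 1} \<longrightarrow> J \<subseteq> {..<n + 1} \<longrightarrow> card I = r + 1 \<longrightarrow> card J = r + 1 \<longrightarrow> sym_trop_singular A I J) =
       (\<exists>L. symmetric_lift (n + 1) A L \<and> rank_le_pred (n + 1) (r + 1) L))"
    then have "(\<forall>I J. I \<subseteq> {..<n + 1} \<longrightarrow> J \<subseteq> {..<n + 1} \<longrightarrow> card I = r + 1 \<longrightarrow> card J = r + 1 \<longrightarrow> sym_trop_singular A' I J) =
       (\<exists>L. symmetric_lift (n + 1) A' L \<and> rank_le_pred (n + 1) (r + 1) L)" using symA' by blast
    then show False using lhs' rhs' by blast
  qed
qed

theorem corollary4: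
  fixes n r :: nat
  assumes "\<not> sym_minors_tropical_basis n r"
  shows "\<not> sym_minors_tropical_basis (n + 1) (r + 1)"
proof -
  obtain A where A: "symmetric_mat n A" and ne: "\<not> ((\<forall>I J. I \<subseteq> {..<n} \<longrightarrow> J \<subseteq> {..<n} \<longrightarrow> card I = r \<longrightarrow> card J = r
            \<longrightarrow> sym_trop_singular A I J) \<longleftrightarrow> (\<exists>L. symmetric_lift n A L \<and> rank_le_pred n r L))"
    using assms unfolding sym_minors_tropical_basis_def by blast
  have "\<not> (\<exists>L. symmetric_lift n A L \<and> rank_le_pred n r L)"
  proof
    assume "\<exists>L. symmetric_lift n A L \<and> rank_le_pred n r L"
    then obtain L where "symmetric_lift n A L" "rank_le_pred n r L" by blast
    then have "\<forall>I J. I \<subseteq> {..<n} \<longrightarrow> J \<subseteq> {..<n} \<longrightarrow> card I = r \<longrightarrow> card J = r \<longrightarrow> sym_trop_singular A I J"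
      using LS by blast
    then show False using ne \<open>\<exists>L. symmetric_lift n A L \<and> rank_le_pred n r L\<close> by blast
  qed
  moreover have "\<forall>I J. I \<subseteq> {..<n} \<longrightarrow> J \<subseteq> {..<n} \<longrightarrow> card I = r \<longrightarrow> card J = r \<longrightarrow> sym_trop_singular A I J"
    using ne calculation by blast
  ultimately show ?thesis using main_step[OF A] by blast
qed


end
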